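(* Let $(\mathcal{H},\langle\cdot,\cdot\rangle)$ be a separable Hilbert space of dimension $N\in\mathbb{N}\cup\{\infty\}$, and set $\mathbb{K}=\{1,\dots,N\}$ if $N<\infty$ and $\mathbb{K}=\mathbb{N}$ if $N=\infty$. Let $\mathsf{H}$ be a quasi-self-adjoint operator in $\mathcal{H}$ with purely real, simple, discrete spectrum, whose eigenfunctions $\{\psi_n\}_{n\in\mathbb{K}}$ form a basis of $\mathcal{H}$ quadratically close to some orthonormal basis $\{\chi_n\}_{n\in\mathbb{K}}$ (i.e. $\sum_n\|\psi_n-\chi_n\|^2<\infty$). Let $\{\phi_n\}_{n\in\mathbb{K}}$ be the eigenfunctions of $\mathsf{H}^*$, normalised so that $\langle\psi_m,\phi_n\rangle=\delta_{nm}$ and $\|\phi_n\|=1$. Define the set $$\mathfrak{C}:=\Big\{\sum_{n\in\mathbb{K}}\big[1+\alpha_n\big]\langle\phi_n,\cdot\rangle\phi_n:\ \alpha\in\ell^2(\mathbb{K};[-1,\infty))\Big\}.$$ Then the minimisation problem $\inf_{\Theta\in\mathfrak{C}}\|\Theta-\mathsf{I}\|_2$ has a unique minimiser $\Theta_\star\in\mathfrak{C}$.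
   Context: The inner product is linear in the second entry; sums over $\mathbb{K}$ are understood as strong limits when $N=\infty$. $\|\cdot\|_2$ denotes the Hilbert–Schmidt norm, $\|\mathsf{T}\|_2^2=\operatorname{Tr}(\mathsf{T}^*\mathsf{T})$. An operator $\mathsf{H}$ is quasi-self-adjoint if it is densely defined and there is a bounded, non-negative self-adjoint $\Theta$ with bounded inverse such that $\mathsf{H}^*=\Theta\mathsf{H}\Theta^{-1}$ (such $\Theta$ is called a metric for $\mathsf{H}$). A basis means every vector has a unique (norm-convergent) expansion in it. Simple spectrum: all eigenvalues have geometric and algebraic multiplicity one; discrete: compact resolvent. *)

theory Defs
  imports "HOL-Analysis.Analysis"
begin

text \<open>Isabelle/HOL-Analysis only provides real inner product spaces. We introduce
complex vector spaces and complex inner product spaces (inner product conjugate-linear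
in the first and linear in the second entry). The real inner product and the norm are
tied to the complex one by Re, so the topology, norm and completeness are the usual ones.\<close>

class complex_vector = real_vector +
  fixes scaleC :: "complex \<Rightarrow> 'a \<Rightarrow> 'a" (infixr \<open>*\<^sub>C\<close> 75)
  assumes scaleC_add_right: "a *\<^sub>C (x + y) = a *\<^sub>C x + a *\<^sub>C y"
    and scaleC_add_left: "(a + b) *\<^sub>C x = a *\<^sub>C x + b *\<^sub>C x"
    and scaleC_scaleC: "a *\<^sub>C (b *\<^sub>C x) = (a * b) *\<^sub>C x"
    and scaleC_one: "1 *\<^sub>C x = x"
    and scaleR_scaleC: "scaleR r x = (complex_of_real r) *\<^sub>C x"

class complex_inner = complex_vector + real_inner +
  fixes cinner :: "'a \<Rightarrow> 'a \<Rightarrow> complex"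
  assumes cinner_commute: "cinner x y = cnj (cinner y x)"
    and cinner_add_right: "cinner x (y + z) = cinner x y + cinner x z"
    and cinner_scaleC_right: "cinner x (c *\<^sub>C y) = c * cinner x y"
    and Re_cinner: "Re (cinner x y) = inner x y"

text \<open>Consistency check: complex numbers form a complex inner product space.\<close>

instantiation complex :: complex_vector
begin
definition scaleC_complex_def: "scaleC a (x::complex) = a * x"
instance
  by standard (auto simp: scaleC_complex_def algebra_simps scaleR_conv_of_real)
end

instantiation complex :: complex_inner
begin
definition cinner_complex_def: "cinner (x::complex) y = cnj x * y"
instance
  by standard (auto simp: cinner_complex_def scaleC_complex_def inner_complex_def algebra_simps)
end

definition csubspace :: "'a::complex_vector set \<Rightarrow> bool" where
  "csubspace S \<longleftrightarrow> 0 \<in> S \<and> (\<forall>x\<in>S. \<forall>y\<in>S. x + y \<in> S) \<and> (\<forall>c. \<forall>x\<in>S. c *\<^sub>C x \<in> S)"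

definition cspan :: "'a::complex_vector set \<Rightarrow> 'a set" where
  "cspan B = {(\<Sum>b\<in>F. c b *\<^sub>C b) | F c. finite F \<and> F \<subseteq> B}"

definition cbounded_linear :: "('a::complex_inner \<Rightarrow> 'a) \<Rightarrow> bool" where
  "cbounded_linear T \<longleftrightarrow> (\<forall>x y. T (x + y) = T x + T y) \<and> (\<forall>c x. T (c *\<^sub>C x) = c *\<^sub>C T x)
     \<and> (\<exists>M. \<forall>x. norm (T x) \<le> M * norm x)"

text \<open>An (unbounded) operator is given by its domain \<open>D\<close> and its action \<open>h\<close> on \<open>D\<close>
(values of \<open>h\<close> outside \<open>D\<close> are irrelevant).\<close>
definition densely_defined :: "'a::complex_inner set \<Rightarrow> ('a \<Rightarrow> 'a) \<Rightarrow> bool" where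
  "densely_defined D h \<longleftrightarrow> csubspace D \<and> closure D = UNIV
     \<and> (\<forall>x\<in>D. \<forall>y\<in>D. h (x + y) = h x + h y) \<and> (\<forall>c. \<forall>x\<in>D. h (c *\<^sub>C x) = c *\<^sub>C h x)"

definition adj_dom :: "'a::complex_inner set \<Rightarrow> ('a \<Rightarrow> 'a) \<Rightarrow> 'a set" where
  "adj_dom D h = {y. \<exists>z. \<forall>x\<in>D. cinner y (h x) = cinner z x}"

definition adj :: "'a::complex_inner set \<Rightarrow> ('a \<Rightarrow> 'a) \<Rightarrow> 'a \<Rightarrow> 'a" where
  "adj D h y = (THE z. \<forall>x\<in>D. cinner y (h x) = cinner z x)"

text \<open>Metric for \<open>H\<close>: bounded, self-adjoint, non-negative, with bounded inverse, and
\<open>H* = \<Theta> H \<Theta>\<^sup>-\<^sup>1\<close> as operators (equal domains and equal actions).\<close>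
definition is_metric :: "'a::complex_inner set \<Rightarrow> ('a \<Rightarrow> 'a) \<Rightarrow> ('a \<Rightarrow> 'a) \<Rightarrow> bool" where
  "is_metric D h \<Theta> \<longleftrightarrow> cbounded_linear \<Theta>
     \<and> (\<forall>x y. cinner (\<Theta> x) y = cinner x (\<Theta> y))
     \<and> (\<forall>x. Re (cinner x (\<Theta> x)) \<ge> 0)
     \<and> (\<exists>\<Theta>'. cbounded_linear \<Theta>' \<and> (\<forall>x. \<Theta> (\<Theta>' x) = x) \<and> (\<forall>x. \<Theta>' (\<Theta> x) = x)
          \<and> adj_dom D h = {y. \<Theta>' y \<in> D}
          \<and> (\<forall>y\<in>adj_dom D h. adj D h y = \<Theta> (h (\<Theta>' y))))"

definition quasi_self_adjoint :: "'a::complex_inner set \<Rightarrow> ('a \<Rightarrow> 'a) \<Rightarrow> bool" where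
  "quasi_self_adjoint D h \<longleftrightarrow> densely_defined D h \<and> (\<exists>\<Theta>. is_metric D h \<Theta>)"

definition resolvent_set :: "'a::complex_inner set \<Rightarrow> ('a \<Rightarrow> 'a) \<Rightarrow> complex set" where
  "resolvent_set D h = {z. bij_betw (\<lambda>x. h x - z *\<^sub>C x) D UNIV
      \<and> cbounded_linear (the_inv_into D (\<lambda>x. h x - z *\<^sub>C x))}"

definition op_spectrum :: "'a::complex_inner set \<Rightarrow> ('a \<Rightarrow> 'a) \<Rightarrow> complex set" where
  "op_spectrum D h = UNIV - resolvent_set D h"

definition resolvent :: "'a::complex_inner set \<Rightarrow> ('a \<Rightarrow> 'a) \<Rightarrow> complex \<Rightarrow> 'a \<Rightarrow> 'a" where
  "resolvent D h z = the_inv_into D (\<lambda>x. h x - z *\<^sub>C x)"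

definition compact_operator :: "('a::complex_inner \<Rightarrow> 'a) \<Rightarrow> bool" where
  "compact_operator T \<longleftrightarrow> (\<forall>S. bounded S \<longrightarrow> compact (closure (T ` S)))"

text \<open>Discrete spectrum: compact resolvent.\<close>
definition compact_resolvent :: "'a::complex_inner set \<Rightarrow> ('a \<Rightarrow> 'a) \<Rightarrow> bool" where
  "compact_resolvent D h \<longleftrightarrow> (\<exists>z\<in>resolvent_set D h. compact_operator (resolvent D h z))"

definition eigenvalue :: "'a::complex_inner set \<Rightarrow> ('a \<Rightarrow> 'a) \<Rightarrow> complex \<Rightarrow> bool" where
  "eigenvalue D h z \<longleftrightarrow> (\<exists>x\<in>D. x \<noteq> 0 \<and> h x = z *\<^sub>C x)"

definition is_eigenvector :: "'a::complex_inner set \<Rightarrow> ('a \<Rightarrow> 'a) \<Rightarrow> 'a \<Rightarrow> bool" where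
  "is_eigenvector D h x \<longleftrightarrow> x \<in> D \<and> x \<noteq> 0 \<and> (\<exists>z. h x = z *\<^sub>C x)"

text \<open>Generalised eigenspace (root space) \<open>\<Union>\<^sub>k ker (H - z)\<^sup>k\<close>, with the natural domains
of the powers.\<close>
definition root_space :: "'a::complex_inner set \<Rightarrow> ('a \<Rightarrow> 'a) \<Rightarrow> complex \<Rightarrow> 'a set" where
  "root_space D h z = {x. \<exists>k. (\<forall>j<k. ((\<lambda>y. h y - z *\<^sub>C y) ^^ j) x \<in> D)
                              \<and> ((\<lambda>y. h y - z *\<^sub>C y) ^^ k) x = 0}"

text \<open>Simple spectrum: every eigenvalue has algebraic (hence geometric) multiplicity one,
i.e. its root space is one-dimensional.\<close>
definition simple_spectrum :: "'a::complex_inner set \<Rightarrow> ('a \<Rightarrow> 'a) \<Rightarrow> bool" where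
  "simple_spectrum D h \<longleftrightarrow> (\<forall>z. eigenvalue D h z \<longrightarrow>
      (\<exists>v. v \<noteq> 0 \<and> root_space D h z = {c *\<^sub>C v | c. True}))"

definition Ksum :: "nat set \<Rightarrow> (nat \<Rightarrow> 'a::real_normed_vector) \<Rightarrow> 'a" where
  "Ksum K f = lim (\<lambda>m. \<Sum>n\<in>K \<inter> {..m}. f n)"

definition is_basis :: "nat set \<Rightarrow> (nat \<Rightarrow> 'a::complex_inner) \<Rightarrow> bool" where
  "is_basis K e \<longleftrightarrow> (\<forall>x. \<exists>!c. (\<forall>n. n \<notin> K \<longrightarrow> c n = 0)
       \<and> (\<lambda>m. \<Sum>n\<in>K \<inter> {..m}. c n *\<^sub>C e n) \<longlonglongrightarrow> x)"

definition orthonormal_basis :: "nat set \<Rightarrow> (nat \<Rightarrow> 'a::complex_inner) \<Rightarrow> bool" where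
  "orthonormal_basis K e \<longleftrightarrow> (\<forall>m\<in>K. \<forall>n\<in>K. cinner (e m) (e n) = (if m = n then 1 else 0))
       \<and> closure (cspan (e ` K)) = UNIV"

definition onb_set :: "'a::complex_inner set \<Rightarrow> bool" where
  "onb_set B \<longleftrightarrow> (\<forall>x\<in>B. \<forall>y\<in>B. cinner x y = (if x = y then 1 else 0)) \<and> closure (cspan B) = UNIV"

text \<open>\<open>\<parallel>T\<parallel>\<^sub>2\<^sup>2 = Tr(T*T) = \<Sum>\<^sub>e \<parallel>T e\<parallel>\<^sup>2\<close> over an orthonormal basis (basis-independent),
valued in \<open>[0,\<infinity>]\<close>.\<close>
definition hs_norm_sq :: "('a::complex_inner \<Rightarrow> 'a) \<Rightarrow> ennreal" where
  "hs_norm_sq T = (\<Sum>\<^sub>\<infinity>e\<in>(SOME B. onb_set B). ennreal ((norm (T e))\<^sup>2))"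

definition hs_norm :: "('a::complex_inner \<Rightarrow> 'a) \<Rightarrow> ennreal" where
  "hs_norm T = (if hs_norm_sq T = \<infinity> then \<infinity> else ennreal (sqrt (enn2real (hs_norm_sq T))))"

definition theta_op :: "nat set \<Rightarrow> (nat \<Rightarrow> 'a::complex_inner) \<Rightarrow> (nat \<Rightarrow> real) \<Rightarrow> 'a \<Rightarrow> 'a" where
  "theta_op K \<phi> \<alpha> x = Ksum K (\<lambda>n. complex_of_real (1 + \<alpha> n) *\<^sub>C (cinner (\<phi> n) x *\<^sub>C \<phi> n))"

definition frakC :: "nat set \<Rightarrow> (nat \<Rightarrow> 'a::complex_inner) \<Rightarrow> ('a \<Rightarrow> 'a) set" where
  "frakC K \<phi> = {theta_op K \<phi> \<alpha> | \<alpha>. (\<forall>n\<in>K. \<alpha> n \<ge> -1) \<and> (\<lambda>n. (\<alpha> n)\<^sup>2) summable_on K}"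

end

theory Submission
  imports Defs
begin

section \<open>Basic complex inner product facts\<close>

lemma scaleC_zero_left[simp]: "0 *\<^sub>C (x::'a::complex_vector) = 0"
  using scaleC_add_left[of 0 0 x] by simp
lemma scaleC_zero_right[simp]: "a *\<^sub>C (0::'a::complex_vector) = 0"
  using scaleC_add_right[of a 0 0] by simp
lemma scaleC_minus_right: "a *\<^sub>C (- x) = - (a *\<^sub>C (x::'a::complex_vector))"
proof -
  have h: "a *\<^sub>C x + a *\<^sub>C (- x) = 0" by (simp flip: scaleC_add_right)
  show ?thesis using minus_unique[OF h] by simp
qed
lemma scaleC_minus_left: "(- a) *\<^sub>C x = - (a *\<^sub>C (x::'a::complex_vector))"
proof -
  have h: "a *\<^sub>C x + (- a) *\<^sub>C x = 0" by (simp flip: scaleC_add_left)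
  show ?thesis using minus_unique[OF h] by simp
qed
lemma scaleC_diff_right: "a *\<^sub>C (x - y) = a *\<^sub>C x - a *\<^sub>C (y::'a::complex_vector)"
  using scaleC_add_right[of a x "-y"] by (simp add: scaleC_minus_right)
lemma scaleC_diff_left: "(a - b) *\<^sub>C x = a *\<^sub>C x - b *\<^sub>C (x::'a::complex_vector)"
  using scaleC_add_left[of a "-b" x] by (simp add: scaleC_minus_left)
lemma scaleC_sum_right: "a *\<^sub>C (\<Sum>i\<in>F. f i) = (\<Sum>i\<in>F. a *\<^sub>C (f i::'a::complex_vector))"
  by (induction F rule: infinite_finite_induct) (simp_all add: scaleC_add_right)
lemma scaleC_sum_left: "(\<Sum>i\<in>F. f i) *\<^sub>C x = (\<Sum>i\<in>F. f i *\<^sub>C (x::'a::complex_vector))"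
  by (induction F rule: infinite_finite_induct) (simp_all add: scaleC_add_left)
lemma scaleC_of_real: "complex_of_real r *\<^sub>C x = r *\<^sub>R (x::'a::complex_vector)"
  by (rule scaleR_scaleC[symmetric])

lemma cinner_add_left: "cinner (x + y) (z::'a::complex_inner) = cinner x z + cinner y z"
proof -
  have "cinner (x + y) z = cnj (cinner z (x + y))" by (rule cinner_commute)
  also have "\<dots> = cnj (cinner z x) + cnj (cinner z y)" by (simp add: cinner_add_right)
  also have "\<dots> = cinner x z + cinner y z" by (simp flip: cinner_commute)
  finally show ?thesis .
qed
lemma cinner_scaleC_left: "cinner (c *\<^sub>C x) (y::'a::complex_inner) = cnj c * cinner x y"
proof -
  have "cinner (c *\<^sub>C x) y = cnj (cinner y (c *\<^sub>C x))" by (rule cinner_commute)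
  also have "\<dots> = cnj c * cnj (cinner y x)" by (simp add: cinner_scaleC_right)
  also have "\<dots> = cnj c * cinner x y" by (simp flip: cinner_commute)
  finally show ?thesis .
qed
lemma cinner_zero_right[simp]: "cinner x (0::'a::complex_inner) = 0"
  using cinner_add_right[of x 0 0] by simp
lemma cinner_zero_left[simp]: "cinner (0::'a::complex_inner) x = 0"
  using cinner_add_left[of 0 0 x] by simp
lemma cinner_minus_right: "cinner x (- y) = - cinner x (y::'a::complex_inner)"
proof -
  have h: "cinner x y + cinner x (- y) = 0" by (simp flip: cinner_add_right)
  show ?thesis using minus_unique[OF h] by simp
qed
lemma cinner_minus_left: "cinner (- x) y = - cinner x (y::'a::complex_inner)"
proof -
  have h: "cinner x y + cinner (- x) y = 0" by (simp flip: cinner_add_left)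
  show ?thesis using minus_unique[OF h] by simp
qed
lemma cinner_diff_right: "cinner x (y - z) = cinner x y - cinner x (z::'a::complex_inner)"
  using cinner_add_right[of x y "-z"] by (simp add: cinner_minus_right)
lemma cinner_diff_left: "cinner (x - y) z = cinner x z - cinner y (z::'a::complex_inner)"
  using cinner_add_left[of x "-y" z] by (simp add: cinner_minus_left)
lemma cinner_sum_right: "cinner x (\<Sum>i\<in>F. f i) = (\<Sum>i\<in>F. cinner (x::'a::complex_inner) (f i))"
  by (induction F rule: infinite_finite_induct) (simp_all add: cinner_add_right)
lemma cinner_sum_left: "cinner (\<Sum>i\<in>F. f i) x = (\<Sum>i\<in>F. cinner (f i) (x::'a::complex_inner))"
  by (induction F rule: infinite_finite_induct) (simp_all add: cinner_add_left)
lemma cinner_scaleR_left: "cinner (r *\<^sub>R x) y = complex_of_real r * cinner x (y::'a::complex_inner)"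
  unfolding scaleR_scaleC[of r x] cinner_scaleC_left by simp
lemma cinner_scaleR_right: "cinner x (r *\<^sub>R y) = complex_of_real r * cinner x (y::'a::complex_inner)"
  unfolding scaleR_scaleC[of r y] cinner_scaleC_right by simp

lemma Im_cinner_self[simp]: "Im (cinner x (x::'a::complex_inner)) = 0"
proof -
  have "Im (cinner x x) = Im (cnj (cinner x x))" by (subst cinner_commute) (rule refl)
  then show ?thesis by simp
qed
lemma cinner_self: "cinner x x = complex_of_real ((norm (x::'a::complex_inner))\<^sup>2)"
  by (simp add: complex_eq_iff Re_cinner power2_norm_eq_inner)
lemma cinner_self_norm: "(norm (x::'a::complex_inner))\<^sup>2 = Re (cinner x x)"
  by (simp add: cinner_self)


lemma norm_scaleC[simp]: "norm (c *\<^sub>C x) = cmod c * norm (x::'a::complex_inner)"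
proof -
  have "(norm (c *\<^sub>C x))\<^sup>2 = Re (cinner (c *\<^sub>C x) (c *\<^sub>C x))" by (rule cinner_self_norm)
  also have "\<dots> = Re (cnj c * c * cinner x x)"
    by (simp add: cinner_scaleC_left cinner_scaleC_right mult.assoc)
  also have "cnj c * c = complex_of_real ((cmod c)\<^sup>2)"
    by (metis complex_norm_square mult.commute)
  also have "Re (complex_of_real ((cmod c)\<^sup>2) * cinner x x) = (cmod c * norm x)\<^sup>2"
    by (simp add: cinner_self power_mult_distrib)
  finally show ?thesis by (simp add: power2_eq_iff_nonneg)
qed

lemma cinner_cs: "cmod (cinner x y) \<le> norm x * norm (y::'a::complex_inner)"
proof (cases "cinner x y = 0")
  case True then show ?thesis by simp
next
  case False
  define z where "z = cinner x y"
  define c where "c = cnj z / complex_of_real (cmod z)"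
  have z0: "z \<noteq> 0" using False by (simp add: z_def)
  have cz: "c * z = complex_of_real (cmod z)"
  proof -
    have "c * z = (cnj z * z) / complex_of_real (cmod z)" by (simp add: c_def)
    also have "cnj z * z = complex_of_real ((cmod z)\<^sup>2)" by (metis complex_norm_square mult.commute)
    also have "complex_of_real ((cmod z)\<^sup>2) / complex_of_real (cmod z) = complex_of_real (cmod z)"
      using z0 by (simp add: power2_eq_square)
    finally show ?thesis .
  qed
  have cm: "cmod c = 1" using z0 by (simp add: c_def norm_divide)
  have "cmod z = Re (cinner x (c *\<^sub>C y))"
    by (simp add: cinner_scaleC_right z_def[symmetric] cz)
  also have "\<dots> = inner x (c *\<^sub>C y)" by (simp add: Re_cinner)
  also have "\<dots> \<le> norm x * norm (c *\<^sub>C y)" by (rule norm_cauchy_schwarz)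
  also have "\<dots> = norm x * norm y" by (simp add: cm)
  finally show ?thesis by (simp add: z_def)
qed

lemma norm_add_sq: "(norm (x + y))\<^sup>2 = (norm x)\<^sup>2 + (norm y)\<^sup>2 + 2 * Re (cinner x (y::'a::complex_inner))"
proof -
  have "(norm (x + y))\<^sup>2 = Re (cinner (x+y) (x+y))" by (rule cinner_self_norm)
  also have "\<dots> = Re (cinner x x) + Re (cinner y y) + Re (cinner x y) + Re (cinner y x)"
    by (simp add: cinner_add_left cinner_add_right)
  also have "Re (cinner y x) = Re (cinner x y)" by (subst cinner_commute) simp
  finally show ?thesis by (simp add: cinner_self_norm)
qed
lemma norm_diff_sq: "(norm (x - y))\<^sup>2 = (norm x)\<^sup>2 + (norm y)\<^sup>2 - 2 * Re (cinner x (y::'a::complex_inner))"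
  using norm_add_sq[of x "-y"] by (simp add: cinner_minus_right)
lemma pythagoras: "cinner x y = 0 \<Longrightarrow> (norm (x + y))\<^sup>2 = (norm x)\<^sup>2 + (norm (y::'a::complex_inner))\<^sup>2"
  by (simp add: norm_add_sq)

lemma bounded_bilinear_cinner: "bounded_bilinear (cinner :: 'a::complex_inner \<Rightarrow> 'a \<Rightarrow> complex)"
proof
  fix a a' b b' :: 'a and r :: real
  show "cinner (a + a') b = cinner a b + cinner a' b" by (rule cinner_add_left)
  show "cinner a (b + b') = cinner a b + cinner a b'" by (rule cinner_add_right)
  show "cinner (r *\<^sub>R a) b = r *\<^sub>R cinner a b" by (simp add: cinner_scaleR_left scaleR_conv_of_real)
  show "cinner a (r *\<^sub>R b) = r *\<^sub>R cinner a b" by (simp add: cinner_scaleR_right scaleR_conv_of_real)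
  show "\<exists>K. \<forall>a b. norm (cinner a b) \<le> norm a * norm b * K"
    by (rule exI[of _ 1]) (simp add: cinner_cs)
qed

lemma bounded_bilinear_scaleC: "bounded_bilinear (scaleC :: complex \<Rightarrow> 'a::complex_inner \<Rightarrow> 'a)"
proof
  fix a a' :: complex and b b' :: 'a and r :: real
  show "(a + a') *\<^sub>C b = a *\<^sub>C b + a' *\<^sub>C b" by (rule scaleC_add_left)
  show "a *\<^sub>C (b + b') = a *\<^sub>C b + a *\<^sub>C b'" by (rule scaleC_add_right)
  show "(r *\<^sub>R a) *\<^sub>C b = r *\<^sub>R (a *\<^sub>C b)"
    unfolding scaleR_scaleC[of r "a *\<^sub>C b"] scaleC_scaleC by (simp add: scaleR_conv_of_real)
  show "a *\<^sub>C (r *\<^sub>R b) = r *\<^sub>R (a *\<^sub>C b)"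
    unfolding scaleR_scaleC[of r "a *\<^sub>C b"] scaleR_scaleC[of r b] scaleC_scaleC by (simp add: mult.commute)
  have "norm (a *\<^sub>C b) \<le> norm a * norm b * 1" for a :: complex and b :: 'a
    by (simp add: norm_scaleC)
  then show "\<exists>K. \<forall>a (b::'a). norm (a *\<^sub>C b) \<le> norm a * norm b * K" by blast
qed

lemmas tendsto_cinner = bounded_bilinear.tendsto[OF bounded_bilinear_cinner]
lemmas tendsto_scaleC = bounded_bilinear.tendsto[OF bounded_bilinear_scaleC]

lemma cinner_eq_zero_all: "(\<And>y. cinner y x = 0) \<Longrightarrow> (x::'a::complex_inner) = 0"
  using cinner_self[of x] by force

lemma cnj_mult_self: "cnj z * z = complex_of_real ((cmod z)\<^sup>2)"
  by (metis complex_norm_square mult.commute)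

definition orthonormal_on :: "'i set \<Rightarrow> ('i \<Rightarrow> 'a::complex_inner) \<Rightarrow> bool" where
  "orthonormal_on I e \<longleftrightarrow> (\<forall>i\<in>I. \<forall>j\<in>I. cinner (e i) (e j) = (if i = j then 1 else 0))"

lemma on_cinner_sum:
  assumes "orthonormal_on I e" "finite F" "F \<subseteq> I" "j \<in> I"
  shows "cinner (e j) (\<Sum>i\<in>F. c i *\<^sub>C e i) = (if j \<in> F then c j else 0)"
proof -
  have "cinner (e j) (\<Sum>i\<in>F. c i *\<^sub>C e i) = (\<Sum>i\<in>F. c i * (if j = i then 1 else 0))"
    using assms unfolding orthonormal_on_def
    by (auto simp: cinner_sum_right cinner_scaleC_right intro!: sum.cong)
  also have "\<dots> = (\<Sum>i\<in>F. if j = i then c i else 0)" by (rule sum.cong) auto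
  also have "\<dots> = (if j \<in> F then c j else 0)"
    using assms(2) by simp
  finally show ?thesis .
qed

lemma on_norm_sum:
  assumes "orthonormal_on I e" "finite F" "F \<subseteq> I"
  shows "(norm (\<Sum>i\<in>F. c i *\<^sub>C e i))\<^sup>2 = (\<Sum>i\<in>F. (cmod (c i))\<^sup>2)"
proof -
  let ?S = "\<Sum>i\<in>F. c i *\<^sub>C e i"
  have "(norm ?S)\<^sup>2 = Re (cinner ?S ?S)" by (rule cinner_self_norm)
  also have "cinner ?S ?S = (\<Sum>i\<in>F. cnj (c i) * cinner (e i) ?S)"
    by (simp add: cinner_sum_left cinner_scaleC_left)
  also have "\<dots> = (\<Sum>i\<in>F. cnj (c i) * c i)"
  proof (rule sum.cong)
    fix i assume "i \<in> F"
    then show "cnj (c i) * cinner (e i) ?S = cnj (c i) * c i"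
      using on_cinner_sum[OF assms, of i c] assms(3) by auto
  qed simp
  also have "\<dots> = (\<Sum>i\<in>F. complex_of_real ((cmod (c i))\<^sup>2))"
    by (intro sum.cong refl) (subst complex_norm_square, simp add: mult.commute)
  finally show ?thesis by (simp add: Re_sum)
qed

lemma on_proj_orth:
  assumes "orthonormal_on I e" "finite F" "F \<subseteq> I" "j \<in> F"
  shows "cinner (e j) (x - (\<Sum>i\<in>F. cinner (e i) x *\<^sub>C e i)) = 0"
proof -
  have j: "j \<in> I" using assms by blast
  show ?thesis using on_cinner_sum[OF assms(1-3) j, of "\<lambda>i. cinner (e i) x"] assms(4)
    by (simp add: cinner_diff_right)
qed

lemma on_proj_orth_span:
  assumes "orthonormal_on I e" "finite F" "F \<subseteq> I"
  shows "cinner (\<Sum>i\<in>F. a i *\<^sub>C e i) (x - (\<Sum>i\<in>F. cinner (e i) x *\<^sub>C e i)) = 0"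
  using assms by (simp add: cinner_sum_left cinner_scaleC_left on_proj_orth)

lemma bessel_identity:
  assumes "orthonormal_on I e" "finite F" "F \<subseteq> I"
  shows "(norm (x - (\<Sum>i\<in>F. cinner (e i) x *\<^sub>C e i)))\<^sup>2 = (norm x)\<^sup>2 - (\<Sum>i\<in>F. (cmod (cinner (e i) x))\<^sup>2)"
proof -
  let ?P = "\<Sum>i\<in>F. cinner (e i) x *\<^sub>C e i"
  have "(norm x)\<^sup>2 = (norm (?P + (x - ?P)))\<^sup>2" by simp
  also have "\<dots> = (norm ?P)\<^sup>2 + (norm (x - ?P))\<^sup>2"
    by (rule pythagoras) (rule on_proj_orth_span[OF assms])
  also have "(norm ?P)\<^sup>2 = (\<Sum>i\<in>F. (cmod (cinner (e i) x))\<^sup>2)" by (rule on_norm_sum[OF assms])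
  finally show ?thesis by simp
qed

lemma bessel_finite:
  assumes "orthonormal_on I e" "finite F" "F \<subseteq> I"
  shows "(\<Sum>i\<in>F. (cmod (cinner (e i) x))\<^sup>2) \<le> (norm x)\<^sup>2"
proof -
  have "0 \<le> (norm (x - (\<Sum>i\<in>F. cinner (e i) x *\<^sub>C e i)))\<^sup>2" by simp
  then show ?thesis using bessel_identity[OF assms, of x] by linarith
qed

lemma best_approx:
  assumes "orthonormal_on I e" "finite F" "F \<subseteq> I"
  shows "(norm (x - (\<Sum>i\<in>F. cinner (e i) x *\<^sub>C e i)))\<^sup>2 \<le> (norm (x - (\<Sum>i\<in>F. c i *\<^sub>C e i)))\<^sup>2"
proof -
  let ?P = "\<Sum>i\<in>F. cinner (e i) x *\<^sub>C e i"
  let ?Q = "\<Sum>i\<in>F. c i *\<^sub>C e i"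
  have eq: "?P - ?Q = (\<Sum>i\<in>F. (cinner (e i) x - c i) *\<^sub>C e i)"
    by (simp add: scaleC_diff_left sum_subtractf)
  have "x - ?Q = (x - ?P) + (?P - ?Q)" by simp
  then have "(norm (x - ?Q))\<^sup>2 = (norm (x - ?P))\<^sup>2 + (norm (?P - ?Q))\<^sup>2"
  proof -
    have "cinner (?P - ?Q) (x - ?P) = 0" unfolding eq by (rule on_proj_orth_span[OF assms])
    then have "cinner (x - ?P) (?P - ?Q) = 0" by (subst cinner_commute) simp
    from pythagoras[OF this] have "(norm ((x - ?P) + (?P - ?Q)))\<^sup>2 = (norm (x - ?P))\<^sup>2 + (norm (?P - ?Q))\<^sup>2" .
    moreover have "(x - ?P) + (?P - ?Q) = x - ?Q" by simp
    ultimately show ?thesis by simp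
  qed
  then show ?thesis by simp
qed

lemma orthonormal_on_inj:
  assumes "orthonormal_on I e" shows "inj_on e I"
proof
  fix i j assume ij: "i \<in> I" "j \<in> I" "e i = e j"
  have "cinner (e i) (e i) = 1" using assms ij(1) unfolding orthonormal_on_def by simp
  then have "cinner (e i) (e j) = 1" using ij(3) by simp
  moreover have "cinner (e i) (e j) = (if i = j then 1 else 0)"
    using assms ij(1,2) unfolding orthonormal_on_def by blast
  ultimately show "i = j" by (cases "i = j") auto
qed

lemma cspan_repr:
  assumes "orthonormal_on I e" "y \<in> cspan (e ` I)"
  obtains F c where "finite F" "F \<subseteq> I" "y = (\<Sum>i\<in>F. c i *\<^sub>C e i)"
proof -
  from assms(2) obtain G d where G: "finite G" "G \<subseteq> e ` I" "y = (\<Sum>b\<in>G. d b *\<^sub>C b)"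
    unfolding cspan_def by blast
  from finite_subset_image[OF G(1,2)] obtain F where F: "F \<subseteq> I" "finite F" "G = e ` F" by blast
  have inj: "inj_on e F" using orthonormal_on_inj[OF assms(1)] F(1) by (rule inj_on_subset)
  have "y = (\<Sum>i\<in>F. d (e i) *\<^sub>C e i)" using G(3) F(3) by (simp add: sum.reindex[OF inj])
  from that[OF F(2) F(1) this] show ?thesis .
qed

lemma sum_extend_zero:
  assumes "finite Y" "F \<subseteq> Y"
  shows "(\<Sum>i\<in>F. c i *\<^sub>C (e i :: 'a::complex_vector)) = (\<Sum>i\<in>Y. (if i \<in> F then c i else 0) *\<^sub>C e i)"
proof -
  have "(\<Sum>i\<in>Y. (if i \<in> F then c i else 0) *\<^sub>C e i) = (\<Sum>i\<in>F. (if i \<in> F then c i else 0) *\<^sub>C e i)"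
    using assms by (intro sum.mono_neutral_right) auto
  also have "\<dots> = (\<Sum>i\<in>F. c i *\<^sub>C e i)" by (rule sum.cong) auto
  finally show ?thesis by simp
qed

lemma parseval:
  assumes on: "orthonormal_on I e" and cl: "closure (cspan (e ` I)) = UNIV"
  shows "((\<lambda>i. (cmod (cinner (e i) x))\<^sup>2) has_sum (norm x)\<^sup>2) I"
  unfolding has_sum_def
proof (rule tendstoI)
  fix \<epsilon> :: real assume \<epsilon>: "\<epsilon> > 0"
  have "x \<in> closure (cspan (e ` I))" using cl by simp
  then obtain y where y: "y \<in> cspan (e ` I)" "dist y x < sqrt \<epsilon>"
    using \<epsilon> by (meson closure_approachable real_sqrt_gt_zero)
  obtain F c where F: "finite F" "F \<subseteq> I" "y = (\<Sum>i\<in>F. c i *\<^sub>C e i)"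
    using cspan_repr[OF on y(1)] by blast
  show "eventually (\<lambda>Y. dist (\<Sum>i\<in>Y. (cmod (cinner (e i) x))\<^sup>2) ((norm x)\<^sup>2) < \<epsilon>) (finite_subsets_at_top I)"
    unfolding eventually_finite_subsets_at_top
  proof (intro exI[of _ F] conjI allI impI)
    fix Y assume Y: "finite Y \<and> F \<subseteq> Y \<and> Y \<subseteq> I"
    let ?s = "\<Sum>i\<in>Y. (cmod (cinner (e i) x))\<^sup>2"
    have le: "?s \<le> (norm x)\<^sup>2" using bessel_finite[OF on] Y by blast
    have "(norm x)\<^sup>2 - ?s = (norm (x - (\<Sum>i\<in>Y. cinner (e i) x *\<^sub>C e i)))\<^sup>2"
      using bessel_identity[OF on] Y by simp
    also have "\<dots> \<le> (norm (x - (\<Sum>i\<in>Y. (if i \<in> F then c i else 0) *\<^sub>C e i)))\<^sup>2"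
      by (rule best_approx[OF on]) (use Y in auto)
    also have "(\<Sum>i\<in>Y. (if i \<in> F then c i else 0) *\<^sub>C e i) = y"
      using F(3) sum_extend_zero[of Y F c e] Y by simp
    also have "(norm (x - y))\<^sup>2 < \<epsilon>"
    proof -
      have "norm (x - y) < sqrt \<epsilon>" using y(2) by (simp add: dist_norm norm_minus_commute)
      then have "(norm (x - y))\<^sup>2 < (sqrt \<epsilon>)\<^sup>2" by (intro power_strict_mono) auto
      then show ?thesis using \<epsilon> by simp
    qed
    finally show "dist ?s ((norm x)\<^sup>2) < \<epsilon>" using le by (simp add: dist_real_def)
  qed (use F in auto)
qed

definition psK :: "nat set \<Rightarrow> (nat \<Rightarrow> 'b::comm_monoid_add) \<Rightarrow> nat \<Rightarrow> 'b" where
  "psK K f m = (\<Sum>n\<in>K \<inter> {..m}. f n)"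

lemma psK_finite[simp]: "finite (K \<inter> {..(m::nat)})" by simp

lemma filterlim_psK_sets: "filterlim (\<lambda>m::nat. K \<inter> {..m}) (finite_subsets_at_top K) sequentially"
  unfolding filterlim_finite_subsets_at_top
proof (intro allI impI)
  fix X assume X: "finite X \<and> X \<subseteq> K"
  then obtain k where k: "X \<subseteq> {..<k}" using finite_nat_bounded by blast
  show "eventually (\<lambda>m. finite (K \<inter> {..m}) \<and> X \<subseteq> K \<inter> {..m} \<and> K \<inter> {..m} \<subseteq> K) sequentially"
    using eventually_ge_at_top[of k]
  proof eventually_elim
    case (elim m) then show ?case using X k by auto
  qed
qed

lemma has_sum_psK: "(f has_sum S) K \<Longrightarrow> psK K f \<longlonglongrightarrow> S"
  unfolding has_sum_def psK_def
  by (rule filterlim_compose[OF _ filterlim_psK_sets])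

lemma eventually_subset_psK:
  assumes "finite F" "F \<subseteq> K"
  shows "eventually (\<lambda>m. F \<subseteq> K \<inter> {..m}) sequentially"
  using filterlim_psK_sets[of K] assms unfolding filterlim_finite_subsets_at_top
  by (auto elim: eventually_mono)

lemma psK_diff:
  assumes "m \<le> n"
  shows "psK K f n - psK K f m = (\<Sum>i\<in>K \<inter> {m<..n}. (f i :: 'b::ab_group_add))"
proof -
  have "K \<inter> {..n} = (K \<inter> {..m}) \<union> (K \<inter> {m<..n})" using assms by auto
  moreover have "(K \<inter> {..m}) \<inter> (K \<inter> {m<..n}) = {}" by auto
  ultimately have "psK K f n = psK K f m + (\<Sum>i\<in>K \<inter> {m<..n}. f i)"
    unfolding psK_def by (simp add: sum.union_disjoint)
  then show ?thesis by simp
qed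

lemma psK_convergent_cauchy:
  fixes x :: "nat \<Rightarrow> 'b::{real_normed_vector,complete_space}"
  assumes "\<And>\<epsilon>. \<epsilon> > 0 \<Longrightarrow> \<exists>M. \<forall>F. finite F \<and> F \<subseteq> K \<inter> {M<..} \<longrightarrow> norm (sum x F) < \<epsilon>"
  shows "convergent (psK K x)"
proof -
  have "Cauchy (psK K x)"
  proof (rule CauchyI)
    fix e :: real assume e: "0 < e"
    obtain M where M: "\<forall>F. finite F \<and> F \<subseteq> K \<inter> {M<..} \<longrightarrow> norm (sum x F) < e"
      using assms[OF e] by blast
    have *: "norm (psK K x m - psK K x n) < e" if "m \<ge> M" "n \<ge> M" "n \<le> m" for m n
    proof -
      have "psK K x m - psK K x n = sum x (K \<inter> {n<..m})" using psK_diff[OF that(3)] .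
      moreover have "K \<inter> {n<..m} \<subseteq> K \<inter> {M<..}" using that by auto
      ultimately show ?thesis using M by auto
    qed
    show "\<exists>M. \<forall>m\<ge>M. \<forall>n\<ge>M. norm (psK K x m - psK K x n) < e"
    proof (intro exI[of _ M] allI impI)
      fix m n assume "m \<ge> M" "n \<ge> M"
      then show "norm (psK K x m - psK K x n) < e"
        using *[of m n] *[of n m] by (cases "n \<le> m") (auto simp: norm_minus_commute)
    qed
  qed
  then show ?thesis by (simp add: Cauchy_convergent_iff)
qed

lemma has_sum_tail_small:
  fixes f :: "nat \<Rightarrow> real"
  assumes "(f has_sum S) K" "\<And>n. n \<in> K \<Longrightarrow> f n \<ge> 0" "\<epsilon> > 0"
  shows "\<exists>M. \<forall>F. finite F \<and> F \<subseteq> K \<inter> {M<..} \<longrightarrow> sum f F < \<epsilon>"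
proof -
  have "psK K f \<longlonglongrightarrow> S" by (rule has_sum_psK[OF assms(1)])
  then obtain M where M: "\<bar>psK K f M - S\<bar> < \<epsilon>"
    using assms(3) unfolding LIMSEQ_def dist_real_def by blast
  show ?thesis
  proof (intro exI[of _ M] allI impI)
    fix F assume F: "finite F \<and> F \<subseteq> K \<inter> {M<..}"
    have disj: "F \<inter> (K \<inter> {..M}) = {}" using F by auto
    have "sum f F + psK K f M = sum f (F \<union> (K \<inter> {..M}))"
      unfolding psK_def using F disj by (simp add: sum.union_disjoint)
    also have "\<dots> \<le> S"
      by (rule finite_sum_le_has_sum[OF assms(1)]) (use F assms(2) in auto)
    finally show "sum f F < \<epsilon>" using M by linarith
  qed
qed

lemma sum_norm_sq_cs:
  fixes v :: "nat \<Rightarrow> 'a::complex_inner"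
  shows "(norm (\<Sum>i\<in>F. c i *\<^sub>C v i))\<^sup>2 \<le> (\<Sum>i\<in>F. (cmod (c i))\<^sup>2) * (\<Sum>i\<in>F. (norm (v i))\<^sup>2)"
proof -
  have "norm (\<Sum>i\<in>F. c i *\<^sub>C v i) \<le> (\<Sum>i\<in>F. cmod (c i) * norm (v i))"
    by (rule order_trans[OF norm_sum]) simp
  then have "(norm (\<Sum>i\<in>F. c i *\<^sub>C v i))\<^sup>2 \<le> (\<Sum>i\<in>F. cmod (c i) * norm (v i))\<^sup>2"
    by (intro power_mono) auto
  also have "\<dots> \<le> (\<Sum>i\<in>F. (cmod (c i))\<^sup>2) * (\<Sum>i\<in>F. (norm (v i))\<^sup>2)"
    by (rule Cauchy_Schwarz_ineq_sum)
  finally show ?thesis .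
qed

lemma block_convergent:
  fixes v :: "nat \<Rightarrow> 'a::{complex_inner,complete_space}"
  assumes blk: "\<And>F. finite F \<Longrightarrow> F \<subseteq> K \<Longrightarrow> (norm (\<Sum>i\<in>F. c i *\<^sub>C v i))\<^sup>2 \<le> C * (\<Sum>i\<in>F. (cmod (c i))\<^sup>2)"
    and l2: "((\<lambda>i. (cmod (c i))\<^sup>2) has_sum S) K"
  shows "convergent (psK K (\<lambda>i. c i *\<^sub>C v i))"
proof (rule psK_convergent_cauchy)
  fix \<epsilon> :: real assume \<epsilon>: "\<epsilon> > 0"
  define C' where "C' = max C 0 + 1"
  have C': "C' > 0" "C \<le> C'" by (auto simp: C'_def)
  obtain M where M: "\<forall>F. finite F \<and> F \<subseteq> K \<inter> {M<..} \<longrightarrow> (\<Sum>i\<in>F. (cmod (c i))\<^sup>2) < \<epsilon>\<^sup>2 / C'"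
    using has_sum_tail_small[OF l2 _, of "\<epsilon>\<^sup>2 / C'"] \<epsilon> C' by auto
  show "\<exists>M. \<forall>F. finite F \<and> F \<subseteq> K \<inter> {M<..} \<longrightarrow> norm (\<Sum>i\<in>F. c i *\<^sub>C v i) < \<epsilon>"
  proof (intro exI[of _ M] allI impI)
    fix F assume F: "finite F \<and> F \<subseteq> K \<inter> {M<..}"
    have s0: "0 \<le> (\<Sum>i\<in>F. (cmod (c i))\<^sup>2)" by (simp add: sum_nonneg)
    have "(norm (\<Sum>i\<in>F. c i *\<^sub>C v i))\<^sup>2 \<le> C * (\<Sum>i\<in>F. (cmod (c i))\<^sup>2)" using blk F by auto
    also have "\<dots> \<le> C' * (\<Sum>i\<in>F. (cmod (c i))\<^sup>2)" using C' s0 by (intro mult_right_mono) auto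
    also have "\<dots> < C' * (\<epsilon>\<^sup>2 / C')" using M F C' by (intro mult_strict_left_mono) auto
    also have "\<dots> = \<epsilon>\<^sup>2" using C' by simp
    finally have "(norm (\<Sum>i\<in>F. c i *\<^sub>C v i))\<^sup>2 < \<epsilon>\<^sup>2" .
    then show "norm (\<Sum>i\<in>F. c i *\<^sub>C v i) < \<epsilon>" using \<epsilon> by (simp add: power_less_imp_less_base)
  qed
qed

lemma block_limit_upper:
  fixes v :: "nat \<Rightarrow> 'a::complex_inner"
  assumes blk: "\<And>F. finite F \<Longrightarrow> F \<subseteq> K \<Longrightarrow> (norm (\<Sum>i\<in>F. c i *\<^sub>C v i))\<^sup>2 \<le> C * (\<Sum>i\<in>F. (cmod (c i))\<^sup>2)"
    and l2: "((\<lambda>i. (cmod (c i))\<^sup>2) has_sum S) K" and C: "C \<ge> 0"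
    and lim: "psK K (\<lambda>i. c i *\<^sub>C v i) \<longlonglongrightarrow> y"
  shows "(norm y)\<^sup>2 \<le> C * S"
proof (rule LIMSEQ_le_const2)
  show "(\<lambda>m. (norm (psK K (\<lambda>i. c i *\<^sub>C v i) m))\<^sup>2) \<longlonglongrightarrow> (norm y)\<^sup>2"
    by (intro tendsto_intros lim)
  show "\<exists>N. \<forall>n\<ge>N. (norm (psK K (\<lambda>i. c i *\<^sub>C v i) n))\<^sup>2 \<le> C * S"
  proof (intro exI[of _ 0] allI impI)
    fix n :: nat
    have "(norm (psK K (\<lambda>i. c i *\<^sub>C v i) n))\<^sup>2 \<le> C * (\<Sum>i\<in>K \<inter> {..n}. (cmod (c i))\<^sup>2)"
      unfolding psK_def by (rule blk) auto
    also have "\<dots> \<le> C * S"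
      by (intro mult_left_mono C finite_sum_le_has_sum[OF l2]) auto
    finally show "(norm (psK K (\<lambda>i. c i *\<^sub>C v i) n))\<^sup>2 \<le> C * S" .
  qed
qed

lemma block_limit_lower:
  fixes v :: "nat \<Rightarrow> 'a::complex_inner"
  assumes blk: "\<And>F. finite F \<Longrightarrow> F \<subseteq> K \<Longrightarrow> (\<Sum>i\<in>F. (cmod (c i))\<^sup>2) \<le> C * (norm (\<Sum>i\<in>F. c i *\<^sub>C v i))\<^sup>2"
    and lim: "psK K (\<lambda>i. c i *\<^sub>C v i) \<longlonglongrightarrow> y"
  shows "\<And>F. finite F \<Longrightarrow> F \<subseteq> K \<Longrightarrow> (\<Sum>i\<in>F. (cmod (c i))\<^sup>2) \<le> C * (norm y)\<^sup>2"
proof -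
  fix F assume F: "finite F" "F \<subseteq> K"
  show "(\<Sum>i\<in>F. (cmod (c i))\<^sup>2) \<le> C * (norm y)\<^sup>2"
  proof (rule LIMSEQ_le_const)
    show "(\<lambda>m. C * (norm (psK K (\<lambda>i. c i *\<^sub>C v i) m))\<^sup>2) \<longlonglongrightarrow> C * (norm y)\<^sup>2"
      by (intro tendsto_intros lim)
    obtain N where N: "\<forall>m\<ge>N. F \<subseteq> K \<inter> {..m}"
      using eventually_subset_psK[OF F] unfolding eventually_sequentially by blast
    show "\<exists>N. \<forall>m\<ge>N. (\<Sum>i\<in>F. (cmod (c i))\<^sup>2) \<le> C * (norm (psK K (\<lambda>i. c i *\<^sub>C v i) m))\<^sup>2"
    proof (intro exI[of _ N] allI impI)
      fix m assume "m \<ge> N"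
      then have sub: "F \<subseteq> K \<inter> {..m}" using N by blast
      have "(\<Sum>i\<in>F. (cmod (c i))\<^sup>2) \<le> (\<Sum>i\<in>K \<inter> {..m}. (cmod (c i))\<^sup>2)"
        by (rule sum_mono2) (use sub in auto)
      also have "\<dots> \<le> C * (norm (psK K (\<lambda>i. c i *\<^sub>C v i) m))\<^sup>2"
        unfolding psK_def by (rule blk) auto
      finally show "(\<Sum>i\<in>F. (cmod (c i))\<^sup>2) \<le> C * (norm (psK K (\<lambda>i. c i *\<^sub>C v i) m))\<^sup>2" .
    qed
  qed
qed

lemma nonneg_sum_bound_has_sum:
  fixes f :: "'i \<Rightarrow> real"
  assumes "\<And>x. x \<in> A \<Longrightarrow> f x \<ge> 0" "\<And>F. finite F \<Longrightarrow> F \<subseteq> A \<Longrightarrow> sum f F \<le> B"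
  shows "f summable_on A" "infsum f A \<le> B"
proof -
  show s: "f summable_on A"
    by (rule nonneg_bdd_above_summable_on) (use assms in \<open>auto intro!: bdd_aboveI\<close>)
  show "infsum f A \<le> B" by (rule infsum_le_finite_sums[OF s]) (use assms in auto)
qed

lemma has_sum_finite_sum:
  fixes f :: "'j \<Rightarrow> 'i \<Rightarrow> 'b::topological_comm_monoid_add"
  assumes "finite G" "\<And>j. j \<in> G \<Longrightarrow> (f j has_sum S j) A"
  shows "((\<lambda>i. \<Sum>j\<in>G. f j i) has_sum (\<Sum>j\<in>G. S j)) A"
  using assms by (induction G rule: finite_induct) (auto intro!: has_sum_add)

lemma block_to_bessel:
  fixes v :: "nat \<Rightarrow> 'a::complex_inner"
  assumes blk: "\<And>c. (norm (\<Sum>i\<in>F. c i *\<^sub>C v i))\<^sup>2 \<le> C * (\<Sum>i\<in>F. (cmod (c i))\<^sup>2)" and C: "C \<ge> 0"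
  shows "(\<Sum>i\<in>F. (cmod (cinner (v i) x))\<^sup>2) \<le> C * (norm x)\<^sup>2"
proof -
  define c where "c i = cinner (v i) x" for i
  define y where "y = (\<Sum>i\<in>F. c i *\<^sub>C v i)"
  define s where "s = (\<Sum>i\<in>F. (cmod (c i))\<^sup>2)"
  have s0: "s \<ge> 0" by (simp add: s_def sum_nonneg)
  have "cinner y x = (\<Sum>i\<in>F. cnj (c i) * c i)"
    by (simp add: y_def cinner_sum_left cinner_scaleC_left c_def)
  also have "\<dots> = (\<Sum>i\<in>F. complex_of_real ((cmod (c i))\<^sup>2))"
    by (rule sum.cong[OF refl]) (rule cnj_mult_self)
  also have "\<dots> = complex_of_real s" by (simp add: s_def)
  finally have yx: "cinner y x = complex_of_real s" .
  have "s = cmod (cinner y x)" using yx s0 by simp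
  also have "\<dots> \<le> norm y * norm x" by (rule cinner_cs)
  finally have "s \<le> norm y * norm x" .
  then have "s\<^sup>2 \<le> (norm y)\<^sup>2 * (norm x)\<^sup>2"
    using s0 by (metis power_mono power_mult_distrib)
  also have "\<dots> \<le> (C * s) * (norm x)\<^sup>2"
    using blk[of c] by (intro mult_right_mono) (auto simp: y_def s_def)
  finally have "s * s \<le> s * (C * (norm x)\<^sup>2)" by (simp add: power2_eq_square algebra_simps)
  then have "s \<le> C * (norm x)\<^sup>2" using s0 C
    by (cases "s = 0") (auto simp: mult_le_cancel_left)
  then show ?thesis by (simp add: s_def c_def)
qed

lemma bessel_to_block:
  fixes v :: "nat \<Rightarrow> 'a::complex_inner"
  assumes bes: "\<And>x. (\<Sum>i\<in>F. (cmod (cinner (v i) x))\<^sup>2) \<le> C * (norm x)\<^sup>2" and C: "C \<ge> 0"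
  shows "(norm (\<Sum>i\<in>F. c i *\<^sub>C v i))\<^sup>2 \<le> C * (\<Sum>i\<in>F. (cmod (c i))\<^sup>2)"
proof -
  define y where "y = (\<Sum>i\<in>F. c i *\<^sub>C v i)"
  define s where "s = (\<Sum>i\<in>F. (cmod (c i))\<^sup>2)"
  define t where "t = (\<Sum>i\<in>F. (cmod (cinner (v i) y))\<^sup>2)"
  have "cinner y y = (\<Sum>i\<in>F. cnj (c i) * cinner (v i) y)"
    by (simp add: y_def cinner_sum_left cinner_scaleC_left)
  then have "(norm y)\<^sup>2 = Re (\<Sum>i\<in>F. cnj (c i) * cinner (v i) y)" by (simp add: cinner_self_norm)
  also have "\<dots> = (\<Sum>i\<in>F. Re (cnj (c i) * cinner (v i) y))" by simp
  also have "\<dots> \<le> (\<Sum>i\<in>F. cmod (c i) * cmod (cinner (v i) y))"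
  proof (rule sum_mono)
    fix i show "Re (cnj (c i) * cinner (v i) y) \<le> cmod (c i) * cmod (cinner (v i) y)"
      using complex_Re_le_cmod[of "cnj (c i) * cinner (v i) y"] by (simp add: norm_mult)
  qed
  finally have "(norm y)\<^sup>2 \<le> (\<Sum>i\<in>F. cmod (c i) * cmod (cinner (v i) y))" .
  then have "((norm y)\<^sup>2)\<^sup>2 \<le> (\<Sum>i\<in>F. cmod (c i) * cmod (cinner (v i) y))\<^sup>2"
    by (intro power_mono) auto
  also have "\<dots> \<le> s * t" unfolding s_def t_def by (rule Cauchy_Schwarz_ineq_sum)
  also have "\<dots> \<le> s * (C * (norm y)\<^sup>2)"
    unfolding t_def using bes[of y] by (intro mult_left_mono) (auto simp: s_def sum_nonneg)
  finally have "(norm y)\<^sup>2 * (norm y)\<^sup>2 \<le> (s * C) * (norm y)\<^sup>2" by (simp add: power2_eq_square algebra_simps)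
  moreover have "s * C \<ge> 0" using C by (simp add: s_def sum_nonneg)
  ultimately have "(norm y)\<^sup>2 \<le> s * C"
  proof (cases "norm y = 0")
    case False
    then have "(norm y)\<^sup>2 > 0" by simp
    then show ?thesis by (rule mult_right_le_imp_le[OF \<open>(norm y)\<^sup>2 * (norm y)\<^sup>2 \<le> (s * C) * (norm y)\<^sup>2\<close>])
  qed simp
  then show ?thesis by (simp add: y_def s_def mult.commute)
qed

lemma norm_add_sq_le: "(norm (a + b))\<^sup>2 \<le> 2 * (norm a)\<^sup>2 + 2 * (norm (b::'a::real_normed_vector))\<^sup>2"
proof -
  have "norm (a + b) \<le> norm a + norm b" by (rule norm_triangle_ineq)
  then have "(norm (a + b))\<^sup>2 \<le> (norm a + norm b)\<^sup>2" by (intro power_mono) auto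
  also have "\<dots> \<le> 2 * (norm a)\<^sup>2 + 2 * (norm b)\<^sup>2"
    using sum_squares_bound[of "norm a" "norm b"] by (simp add: power2_sum)
  finally show ?thesis .
qed

lemma cmod_add_sq_le: "(cmod (a + b))\<^sup>2 \<le> 2 * (cmod a)\<^sup>2 + 2 * (cmod b)\<^sup>2"
  by (rule norm_add_sq_le)

locale frame_setup =
  fixes K :: "nat set" and psi omega phi :: "nat \<Rightarrow> 'a::{complex_inner,complete_space}"
  assumes psi_basis: "is_basis K psi"
    and chi_onb: "orthonormal_basis K omega"
    and quad_close: "(\<lambda>n. (norm (psi n - omega n))\<^sup>2) summable_on K"
    and biorth: "\<forall>m\<in>K. \<forall>n\<in>K. cinner (psi m) (phi n) = (if n = m then 1 else 0)"
    and phi_norm: "\<forall>n\<in>K. norm (phi n) = 1"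
begin

lemma onw: "orthonormal_on K omega"
  using chi_onb unfolding orthonormal_basis_def orthonormal_on_def by blast

lemma clw: "closure (cspan (omega ` K)) = UNIV"
  using chi_onb unfolding orthonormal_basis_def by blast

lemma parseval_w: "((\<lambda>n. (cmod (cinner (omega n) x))\<^sup>2) has_sum (norm x)\<^sup>2) K"
  by (rule parseval[OF onw clw])

lemma bessel_w: "finite F \<Longrightarrow> F \<subseteq> K \<Longrightarrow> (\<Sum>n\<in>F. (cmod (cinner (omega n) x))\<^sup>2) \<le> (norm x)\<^sup>2"
  by (rule bessel_finite[OF onw])

lemma expansion_w: "psK K (\<lambda>n. cinner (omega n) x *\<^sub>C omega n) \<longlonglongrightarrow> x"
proof -
  have lim: "psK K (\<lambda>n. (cmod (cinner (omega n) x))\<^sup>2) \<longlonglongrightarrow> (norm x)\<^sup>2"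
    by (rule has_sum_psK[OF parseval_w])
  have eq: "(norm (x - psK K (\<lambda>n. cinner (omega n) x *\<^sub>C omega n) m))\<^sup>2
        = (norm x)\<^sup>2 - psK K (\<lambda>n. (cmod (cinner (omega n) x))\<^sup>2) m" for m
    unfolding psK_def by (rule bessel_identity[OF onw]) auto
  have "(\<lambda>m. (norm (x - psK K (\<lambda>n. cinner (omega n) x *\<^sub>C omega n) m))\<^sup>2) \<longlonglongrightarrow> (norm x)\<^sup>2 - (norm x)\<^sup>2"
    unfolding eq by (intro tendsto_intros lim)
  then have "(\<lambda>m. sqrt ((norm (x - psK K (\<lambda>n. cinner (omega n) x *\<^sub>C omega n) m))\<^sup>2)) \<longlonglongrightarrow> sqrt 0"
    by (intro tendsto_intros) simp
  then have "(\<lambda>m. norm (psK K (\<lambda>n. cinner (omega n) x *\<^sub>C omega n) m - x)) \<longlonglongrightarrow> 0"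
    by (simp add: norm_minus_commute)
  then show ?thesis by (simp add: tendsto_norm_zero_iff LIM_zero_iff)
qed

lemma w_zero: "(\<And>n. n \<in> K \<Longrightarrow> cinner (omega n) x = 0) \<Longrightarrow> x = 0"
proof -
  assume z: "\<And>n. n \<in> K \<Longrightarrow> cinner (omega n) x = 0"
  have "((\<lambda>n. (cmod (cinner (omega n) x))\<^sup>2) has_sum 0) K"
    using z by (subst has_sum_cong[of K _ "\<lambda>_. 0"]) auto
  then have "(norm x)\<^sup>2 = 0" using parseval_w[of x] has_sum_unique by blast
  then show "x = 0" by simp
qed

definition d where "d n = psi n - omega n"
definition Dpsi where "Dpsi = infsum (\<lambda>n. (norm (d n))\<^sup>2) K"

lemma Dpsi_has_sum: "((\<lambda>n. (norm (d n))\<^sup>2) has_sum Dpsi) K"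
  using quad_close unfolding Dpsi_def d_def by (simp add: has_sum_infsum)

lemma Dpsi_nonneg: "Dpsi \<ge> 0"
  unfolding Dpsi_def by (rule infsum_nonneg) auto

lemma d_sum_le: "finite F \<Longrightarrow> F \<subseteq> K \<Longrightarrow> (\<Sum>n\<in>F. (norm (d n))\<^sup>2) \<le> Dpsi"
  by (rule finite_sum_le_has_sum[OF Dpsi_has_sum]) auto

lemma d_block:
  assumes "finite F" "F \<subseteq> K"
  shows "(norm (\<Sum>i\<in>F. c i *\<^sub>C d i))\<^sup>2 \<le> Dpsi * (\<Sum>i\<in>F. (cmod (c i))\<^sup>2)"
proof -
  have "(norm (\<Sum>i\<in>F. c i *\<^sub>C d i))\<^sup>2 \<le> (\<Sum>i\<in>F. (cmod (c i))\<^sup>2) * (\<Sum>i\<in>F. (norm (d i))\<^sup>2)"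
    by (rule sum_norm_sq_cs)
  also have "\<dots> \<le> (\<Sum>i\<in>F. (cmod (c i))\<^sup>2) * Dpsi"
    by (intro mult_left_mono d_sum_le assms) (simp add: sum_nonneg)
  finally show ?thesis by (simp add: mult.commute)
qed

lemma w_block:
  assumes "finite F" "F \<subseteq> K"
  shows "(norm (\<Sum>i\<in>F. c i *\<^sub>C omega i))\<^sup>2 = (\<Sum>i\<in>F. (cmod (c i))\<^sup>2)"
  by (rule on_norm_sum[OF onw assms])

definition Bpsi where "Bpsi = 2 + 2 * Dpsi"

lemma Bpsi_pos: "Bpsi > 0" using Dpsi_nonneg by (simp add: Bpsi_def)

lemma psi_block:
  assumes "finite F" "F \<subseteq> K"
  shows "(norm (\<Sum>i\<in>F. c i *\<^sub>C psi i))\<^sup>2 \<le> Bpsi * (\<Sum>i\<in>F. (cmod (c i))\<^sup>2)"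
proof -
  have "(\<Sum>i\<in>F. c i *\<^sub>C psi i) = (\<Sum>i\<in>F. c i *\<^sub>C omega i) + (\<Sum>i\<in>F. c i *\<^sub>C d i)"
    by (simp add: d_def scaleC_diff_right sum.distrib[symmetric])
  then have "(norm (\<Sum>i\<in>F. c i *\<^sub>C psi i))\<^sup>2
     \<le> 2 * (norm (\<Sum>i\<in>F. c i *\<^sub>C omega i))\<^sup>2 + 2 * (norm (\<Sum>i\<in>F. c i *\<^sub>C d i))\<^sup>2"
    using norm_add_sq_le by metis
  also have "\<dots> \<le> 2 * (\<Sum>i\<in>F. (cmod (c i))\<^sup>2) + 2 * (Dpsi * (\<Sum>i\<in>F. (cmod (c i))\<^sup>2))"
    using w_block[OF assms, of c] d_block[OF assms, of c] by linarith
  also have "\<dots> = Bpsi * (\<Sum>i\<in>F. (cmod (c i))\<^sup>2)" by (simp add: Bpsi_def algebra_simps)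
  finally show ?thesis .
qed

lemma psi_bessel:
  assumes "finite F" "F \<subseteq> K"
  shows "(\<Sum>i\<in>F. (cmod (cinner (psi i) x))\<^sup>2) \<le> Bpsi * (norm x)\<^sup>2"
  by (rule block_to_bessel) (use psi_block[OF assms] Bpsi_pos in auto)

lemma cinner_psi_phi_sum:
  assumes "finite F" "F \<subseteq> K" "m \<in> K"
  shows "cinner (psi m) (\<Sum>i\<in>F. c i *\<^sub>C phi i) = (if m \<in> F then c m else 0)"
proof -
  have "cinner (psi m) (\<Sum>i\<in>F. c i *\<^sub>C phi i) = (\<Sum>i\<in>F. if m = i then c i else 0)"
    unfolding cinner_sum_right cinner_scaleC_right
    by (rule sum.cong[OF refl]) (use assms biorth in auto)
  also have "\<dots> = (if m \<in> F then c m else 0)" using assms(1) by simp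
  finally show ?thesis .
qed

lemma phi_lower_block:
  assumes "finite F" "F \<subseteq> K"
  shows "(\<Sum>i\<in>F. (cmod (c i))\<^sup>2) \<le> Bpsi * (norm (\<Sum>i\<in>F. c i *\<^sub>C phi i))\<^sup>2"
proof -
  have "(\<Sum>i\<in>F. (cmod (c i))\<^sup>2) = (\<Sum>i\<in>F. (cmod (cinner (psi i) (\<Sum>j\<in>F. c j *\<^sub>C phi j)))\<^sup>2)"
  proof (rule sum.cong[OF refl])
    fix i assume i: "i \<in> F"
    then have "i \<in> K" using assms by blast
    then show "(cmod (c i))\<^sup>2 = (cmod (cinner (psi i) (\<Sum>j\<in>F. c j *\<^sub>C phi j)))\<^sup>2"
      using cinner_psi_phi_sum[OF assms, of i c] i by simp
  qed
  also have "\<dots> \<le> Bpsi * (norm (\<Sum>j\<in>F. c j *\<^sub>C phi j))\<^sup>2" by (rule psi_bessel[OF assms])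
  finally show ?thesis .
qed

lemma basis_coeff:
  assumes lim: "psK K (\<lambda>n. a n *\<^sub>C psi n) \<longlonglongrightarrow> x" and k: "k \<in> K"
  shows "a k = cinner (phi k) x"
proof -
  have l1: "(\<lambda>m. cinner (phi k) (psK K (\<lambda>n. a n *\<^sub>C psi n) m)) \<longlonglongrightarrow> cinner (phi k) x"
    by (intro tendsto_cinner tendsto_const lim)
  have ev: "eventually (\<lambda>m. cinner (phi k) (psK K (\<lambda>n. a n *\<^sub>C psi n) m) = a k) sequentially"
    using eventually_ge_at_top[of k]
  proof eventually_elim
    case (elim m)
    have "cinner (phi k) (psK K (\<lambda>n. a n *\<^sub>C psi n) m) = (\<Sum>n\<in>K \<inter> {..m}. a n * cinner (phi k) (psi n))"
      unfolding psK_def cinner_sum_right cinner_scaleC_right ..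
    also have "\<dots> = (\<Sum>n\<in>K \<inter> {..m}. if n = k then a n else 0)"
    proof (rule sum.cong[OF refl])
      fix n assume n: "n \<in> K \<inter> {..m}"
      have "cinner (phi k) (psi n) = cnj (cinner (psi n) (phi k))" by (rule cinner_commute)
      also have "\<dots> = (if n = k then 1 else 0)" using biorth n k by auto
      finally show "a n * cinner (phi k) (psi n) = (if n = k then a n else 0)" by simp
    qed
    also have "\<dots> = a k" using k elim by simp
    finally show ?case .
  qed
  have "(\<lambda>m. cinner (phi k) (psK K (\<lambda>n. a n *\<^sub>C psi n) m)) \<longlonglongrightarrow> a k"
    by (rule tendsto_eventually[OF ev])
  then show ?thesis using l1 LIMSEQ_unique by blast
qed

end

lemma finite_bw:
  fixes f :: "nat \<Rightarrow> nat \<Rightarrow> complex"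
  assumes "finite G" and bnd: "\<And>k n. cmod (f k n) \<le> B"
  shows "\<exists>r. strict_mono r \<and> (\<forall>n\<in>G. convergent (\<lambda>k. f (r k) n))"
  using assms(1)
proof (induction G rule: finite_induct)
  case empty
  show ?case by (rule exI[of _ id]) (simp add: strict_mono_def)
next
  case (insert g G)
  then obtain r where r: "strict_mono r" "\<forall>n\<in>G. convergent (\<lambda>k. f (r k) n)" by blast
  have "bounded (range (\<lambda>k. f (r k) g))"
    using bnd by (intro boundedI[of _ B]) auto
  then obtain l r2 where r2: "strict_mono r2" "((\<lambda>k. f (r k) g) \<circ> r2) \<longlonglongrightarrow> l"
    using bounded_imp_convergent_subsequence by blast
  show ?case
  proof (intro exI[of _ "r \<circ> r2"] conjI ballI)
    show "strict_mono (r \<circ> r2)" using r(1) r2(1) by (rule strict_mono_o)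
    fix n assume "n \<in> insert g G"
    then show "convergent (\<lambda>k. f ((r \<circ> r2) k) n)"
    proof
      assume "n = g" then show ?thesis using r2(2) by (auto simp: convergent_def o_def)
    next
      assume "n \<in> G"
      then have "convergent ((\<lambda>k. f (r k) n) \<circ> r2)"
        using r(2) r2(1) convergent_subseq_convergent by blast
      then show ?thesis by (simp add: o_def)
    qed
  qed
qed

context frame_setup begin

definition synth :: "(nat \<Rightarrow> 'a) \<Rightarrow> 'a \<Rightarrow> 'a" where
  "synth v u = lim (psK K (\<lambda>n. cinner (omega n) u *\<^sub>C v n))"

definition blockb :: "(nat \<Rightarrow> 'a) \<Rightarrow> real \<Rightarrow> bool" where
  "blockb v C \<longleftrightarrow> C \<ge> 0 \<and> (\<forall>F c. finite F \<longrightarrow> F \<subseteq> K \<longrightarrow> (norm (\<Sum>i\<in>F. c i *\<^sub>C v i))\<^sup>2 \<le> C * (\<Sum>i\<in>F. (cmod (c i))\<^sup>2))"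

lemma synth_lim:
  assumes "blockb v C"
  shows "psK K (\<lambda>n. cinner (omega n) u *\<^sub>C v n) \<longlonglongrightarrow> synth v u"
proof -
  have "convergent (psK K (\<lambda>n. cinner (omega n) u *\<^sub>C v n))"
    by (rule block_convergent[OF _ parseval_w]) (use assms in \<open>auto simp: blockb_def\<close>)
  then show ?thesis unfolding synth_def by (simp add: convergent_LIMSEQ_iff)
qed

lemma synth_bound:
  assumes "blockb v C"
  shows "(norm (synth v u))\<^sup>2 \<le> C * (norm u)\<^sup>2"
  by (rule block_limit_upper[OF _ parseval_w _ synth_lim[OF assms]]) (use assms in \<open>auto simp: blockb_def\<close>)

lemma synth_diff:
  assumes "blockb v C"
  shows "synth v (a - b) = synth v a - synth v b"
proof -
  have "psK K (\<lambda>n. cinner (omega n) (a - b) *\<^sub>C v n)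
        = (\<lambda>m. psK K (\<lambda>n. cinner (omega n) a *\<^sub>C v n) m - psK K (\<lambda>n. cinner (omega n) b *\<^sub>C v n) m)"
    by (rule ext) (simp add: psK_def cinner_diff_right scaleC_diff_left sum_subtractf)
  moreover have "(\<lambda>m. psK K (\<lambda>n. cinner (omega n) a *\<^sub>C v n) m - psK K (\<lambda>n. cinner (omega n) b *\<^sub>C v n) m)
       \<longlonglongrightarrow> synth v a - synth v b"
    by (intro tendsto_diff synth_lim[OF assms])
  ultimately show ?thesis using synth_lim[OF assms, of "a - b"] LIMSEQ_unique by metis
qed

lemma synth_scale:
  assumes "blockb v C"
  shows "synth v (s *\<^sub>C a) = s *\<^sub>C synth v a"
proof -
  have "psK K (\<lambda>n. cinner (omega n) (s *\<^sub>C a) *\<^sub>C v n)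
        = (\<lambda>m. s *\<^sub>C psK K (\<lambda>n. cinner (omega n) a *\<^sub>C v n) m)"
    by (rule ext) (simp add: psK_def cinner_scaleC_right scaleC_scaleC scaleC_sum_right)
  moreover have "(\<lambda>m. s *\<^sub>C psK K (\<lambda>n. cinner (omega n) a *\<^sub>C v n) m) \<longlonglongrightarrow> s *\<^sub>C synth v a"
    by (intro tendsto_scaleC tendsto_const synth_lim[OF assms])
  ultimately show ?thesis using synth_lim[OF assms, of "s *\<^sub>C a"] LIMSEQ_unique by metis
qed

lemma synth_cont:
  assumes "blockb v C" and lim: "X \<longlonglongrightarrow> u"
  shows "(\<lambda>k. synth v (X k)) \<longlonglongrightarrow> synth v u"
proof -
  have C: "C \<ge> 0" using assms by (simp add: blockb_def)
  have b: "norm (synth v (X k) - synth v u) \<le> sqrt C * norm (X k - u)" for k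
  proof -
    have "(norm (synth v (X k - u)))\<^sup>2 \<le> C * (norm (X k - u))\<^sup>2" by (rule synth_bound[OF assms(1)])
    then have "sqrt ((norm (synth v (X k - u)))\<^sup>2) \<le> sqrt (C * (norm (X k - u))\<^sup>2)"
      by (rule real_sqrt_le_mono)
    then show ?thesis using C by (simp add: real_sqrt_mult synth_diff[OF assms(1)])
  qed
  have "(\<lambda>k. sqrt C * norm (X k - u)) \<longlonglongrightarrow> sqrt C * 0"
    using lim by (intro tendsto_intros) (simp add: LIM_zero_iff tendsto_norm_zero_iff)
  then have "(\<lambda>k. sqrt C * norm (X k - u)) \<longlonglongrightarrow> 0" by simp
  then have h0: "(\<lambda>k. sqrt C * norm (X k - u)) \<longlonglongrightarrow> 0" .
  have "(\<lambda>k. norm (synth v (X k) - synth v u)) \<longlonglongrightarrow> 0"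
  proof (rule tendsto_sandwich[OF always_eventually always_eventually tendsto_const h0])
    show "\<forall>k. 0 \<le> norm (synth v (X k) - synth v u)" by simp
    show "\<forall>k. norm (synth v (X k) - synth v u) \<le> sqrt C * norm (X k - u)" using b by blast
  qed
  then show ?thesis by (simp add: tendsto_norm_zero_iff LIM_zero_iff)
qed

lemma psi_blockb: "blockb psi Bpsi"
  unfolding blockb_def using psi_block Bpsi_pos by auto

end

lemma ex1_two: "\<exists>!x. P x \<Longrightarrow> P a \<Longrightarrow> P b \<Longrightarrow> a = b" by blast

context frame_setup begin

lemma norm_omega: "n \<in> K \<Longrightarrow> norm (omega n) = 1"
proof -
  assume n: "n \<in> K"
  have "cinner (omega n) (omega n) = 1" using onw n unfolding orthonormal_on_def by simp
  then have "(norm (omega n))\<^sup>2 = 1" by (simp add: cinner_self_norm)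
  then show ?thesis using norm_ge_zero[of "omega n"] by (auto simp: power2_eq_1_iff)
qed

lemma synth_finite:
  assumes "finite F" "F \<subseteq> K"
  shows "synth psi (\<Sum>i\<in>F. a i *\<^sub>C omega i) = (\<Sum>i\<in>F. a i *\<^sub>C psi i)"
proof -
  let ?u = "\<Sum>i\<in>F. a i *\<^sub>C omega i"
  have ev: "eventually (\<lambda>m. psK K (\<lambda>n. cinner (omega n) ?u *\<^sub>C psi n) m = (\<Sum>i\<in>F. a i *\<^sub>C psi i)) sequentially"
    using eventually_subset_psK[OF assms]
  proof eventually_elim
    case (elim m)
    have "psK K (\<lambda>n. cinner (omega n) ?u *\<^sub>C psi n) m = (\<Sum>n\<in>K \<inter> {..m}. (if n \<in> F then a n else 0) *\<^sub>C psi n)"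
      unfolding psK_def
      by (rule sum.cong[OF refl]) (simp add: on_cinner_sum[OF onw assms])
    also have "\<dots> = (\<Sum>i\<in>F. a i *\<^sub>C psi i)"
      by (rule sum_extend_zero[symmetric]) (use elim in auto)
    finally show ?case .
  qed
  have "psK K (\<lambda>n. cinner (omega n) ?u *\<^sub>C psi n) \<longlonglongrightarrow> (\<Sum>i\<in>F. a i *\<^sub>C psi i)"
    by (rule tendsto_eventually[OF ev])
  then show ?thesis using synth_lim[OF psi_blockb, of ?u] LIMSEQ_unique by blast
qed

lemma T_below: "\<exists>c>0. \<forall>u. norm u = 1 \<longrightarrow> c \<le> norm (synth psi u)"
proof (rule ccontr)
  assume neg: "\<not> ?thesis"
  have "\<forall>k::nat. \<exists>u. norm u = 1 \<and> norm (synth psi u) < inverse (real (Suc k))"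
  proof
    fix k :: nat
    have "inverse (real (Suc k)) > 0" by simp
    then show "\<exists>u. norm u = 1 \<and> norm (synth psi u) < inverse (real (Suc k))"
      using neg by (meson not_le)
  qed
  then obtain U where U: "\<And>k. norm (U k) = 1" "\<And>k. norm (synth psi (U k)) < inverse (real (Suc k))"
    by metis
  have TU0: "(\<lambda>k. synth psi (U k)) \<longlonglongrightarrow> 0"
  proof -
    have "(\<lambda>k. norm (synth psi (U k))) \<longlonglongrightarrow> 0"
    proof (rule tendsto_sandwich[OF always_eventually always_eventually tendsto_const LIMSEQ_inverse_real_of_nat])
      show "\<forall>k. 0 \<le> norm (synth psi (U k))" by simp
      show "\<forall>k. norm (synth psi (U k)) \<le> inverse (real (Suc k))" using U(2) less_imp_le by blast
    qed
    then show ?thesis by (simp add: tendsto_norm_zero_iff)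
  qed
  obtain M where M: "\<forall>F. finite F \<and> F \<subseteq> K \<inter> {M<..} \<longrightarrow> (\<Sum>n\<in>F. (norm (d n))\<^sup>2) < 1/4"
    using has_sum_tail_small[OF Dpsi_has_sum, of "1/4"] by auto
  define dt where "dt n = (if M < n then d n else 0)" for n
  define dh where "dh n = (if M < n then 0 else d n)" for n
  define G where "G = K \<inter> {..M}"
  have finG: "finite G" by (simp add: G_def)
  define Th where "Th u = (\<Sum>n\<in>G. cinner (omega n) u *\<^sub>C d n)" for u
  have dt_blockb: "blockb dt (1/4)"
    unfolding blockb_def
  proof (intro conjI allI impI)
    fix F c assume F: "finite (F::nat set)" "F \<subseteq> K"
    have "(\<Sum>i\<in>F. c i *\<^sub>C dt i) = (\<Sum>i\<in>F \<inter> {M<..}. c i *\<^sub>C d i)"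
      unfolding dt_def using F(1) by (simp add: sum.inter_restrict if_distrib[of "\<lambda>v. c _ *\<^sub>C v"] cong: if_cong)
    then have "(norm (\<Sum>i\<in>F. c i *\<^sub>C dt i))\<^sup>2 \<le> (\<Sum>i\<in>F \<inter> {M<..}. (cmod (c i))\<^sup>2) * (\<Sum>i\<in>F \<inter> {M<..}. (norm (d i))\<^sup>2)"
      using sum_norm_sq_cs by metis
    also have "\<dots> \<le> (\<Sum>i\<in>F. (cmod (c i))\<^sup>2) * (1/4)"
    proof (rule mult_mono)
      show "(\<Sum>i\<in>F \<inter> {M<..}. (cmod (c i))\<^sup>2) \<le> (\<Sum>i\<in>F. (cmod (c i))\<^sup>2)"
        by (rule sum_mono2) (use F in auto)
      have "finite (F \<inter> {M<..}) \<and> F \<inter> {M<..} \<subseteq> K \<inter> {M<..}" using F by auto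
      from M[rule_format, OF this]
      show "(\<Sum>i\<in>F \<inter> {M<..}. (norm (d i))\<^sup>2) \<le> 1/4" by simp
    qed (auto simp: sum_nonneg)
    finally show "(norm (\<Sum>i\<in>F. c i *\<^sub>C dt i))\<^sup>2 \<le> 1/4 * (\<Sum>i\<in>F. (cmod (c i))\<^sup>2)" by simp
  qed simp
  have decomp: "synth psi u = u + synth dt u + Th u" for u
  proof -
    have psi_eq: "psi n = omega n + dt n + dh n" for n by (simp add: dt_def dh_def d_def)
    have "psK K (\<lambda>n. cinner (omega n) u *\<^sub>C psi n) = (\<lambda>m. psK K (\<lambda>n. cinner (omega n) u *\<^sub>C omega n) m
        + psK K (\<lambda>n. cinner (omega n) u *\<^sub>C dt n) m + psK K (\<lambda>n. cinner (omega n) u *\<^sub>C dh n) m)"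
      by (rule ext) (simp add: psK_def psi_eq scaleC_add_right sum.distrib)
    moreover have "psK K (\<lambda>n. cinner (omega n) u *\<^sub>C dh n) \<longlonglongrightarrow> Th u"
    proof (rule tendsto_eventually)
      show "eventually (\<lambda>m. psK K (\<lambda>n. cinner (omega n) u *\<^sub>C dh n) m = Th u) sequentially"
        using eventually_ge_at_top[of M]
      proof eventually_elim
        case (elim m)
        have "psK K (\<lambda>n. cinner (omega n) u *\<^sub>C dh n) m = (\<Sum>n\<in>K \<inter> {..m}. if n \<in> G then cinner (omega n) u *\<^sub>C d n else 0)"
          unfolding psK_def by (rule sum.cong[OF refl]) (auto simp: dh_def G_def)
        also have "\<dots> = (\<Sum>n\<in>(K \<inter> {..m}) \<inter> G. cinner (omega n) u *\<^sub>C d n)"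
          by (simp add: sum.inter_restrict)
        also have "(K \<inter> {..m}) \<inter> G = G" using elim by (auto simp: G_def)
        finally show ?case by (simp add: Th_def)
      qed
    qed
    ultimately have "psK K (\<lambda>n. cinner (omega n) u *\<^sub>C psi n) \<longlonglongrightarrow> u + synth dt u + Th u"
      using expansion_w[of u] synth_lim[OF dt_blockb, of u] by (auto intro!: tendsto_add)
    then show ?thesis using synth_lim[OF psi_blockb, of u] LIMSEQ_unique by blast
  qed
  have S_half: "norm (synth dt u) \<le> norm u / 2" for u
  proof -
    have "(norm (synth dt u))\<^sup>2 \<le> (norm u / 2)\<^sup>2"
      using synth_bound[OF dt_blockb, of u] by (simp add: power_divide)
    then show ?thesis by (rule power2_le_imp_le) simp
  qed
  have lowerIS: "norm (a - b) \<le> 2 * norm ((a + synth dt a) - (b + synth dt b))" for a b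
  proof -
    have "(a + synth dt a) - (b + synth dt b) = (a - b) + synth dt (a - b)"
      by (simp add: synth_diff[OF dt_blockb])
    moreover have "norm ((a - b) + synth dt (a - b)) \<ge> norm (a - b) - norm (synth dt (a - b))"
      by (metis norm_diff_ineq diff_minus_eq_add norm_minus_cancel)
    ultimately show ?thesis using S_half[of "a - b"] by (simp only:)
  qed
  \<comment> \<open>compactness in the finite part\<close>
  define f where "f k n = (if n \<in> G then cinner (omega n) (U k) else 0)" for k n
  have fb: "cmod (f k n) \<le> 1" for k n
  proof (cases "n \<in> G")
    case True
    then have "n \<in> K" by (simp add: G_def)
    have "cmod (cinner (omega n) (U k)) \<le> norm (omega n) * norm (U k)" by (rule cinner_cs)
    then show ?thesis using True U(1) norm_omega \<open>n \<in> K\<close> by (simp add: f_def)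
  qed (simp add: f_def)
  obtain r where r: "strict_mono r" "\<forall>n\<in>G. convergent (\<lambda>k. f (r k) n)"
    using finite_bw[of G f 1, OF finG fb] by blast
  define V where "V k = U (r k)" for k
  define h where "h n = lim (\<lambda>k. f (r k) n)" for n
  have hlim: "n \<in> G \<Longrightarrow> (\<lambda>k. cinner (omega n) (V k)) \<longlonglongrightarrow> h n" for n
    using r(2) by (simp add: V_def h_def f_def convergent_LIMSEQ_iff)
  define w where "w = (\<Sum>n\<in>G. h n *\<^sub>C d n)"
  have Thlim: "(\<lambda>k. Th (V k)) \<longlonglongrightarrow> w"
    unfolding Th_def w_def by (intro tendsto_sum tendsto_scaleC hlim tendsto_const)
  have TV0: "(\<lambda>k. synth psi (V k)) \<longlonglongrightarrow> 0"
    using LIMSEQ_subseq_LIMSEQ[OF TU0 r(1)] by (simp add: V_def o_def)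
  have Alim: "(\<lambda>k. V k + synth dt (V k)) \<longlonglongrightarrow> 0 - w"
  proof -
    have "(\<lambda>k. synth psi (V k) - Th (V k)) \<longlonglongrightarrow> 0 - w" by (intro tendsto_diff TV0 Thlim)
    moreover have "synth psi (V k) - Th (V k) = V k + synth dt (V k)" for k using decomp[of "V k"] by simp
    ultimately show ?thesis by simp
  qed
  have "Cauchy V"
  proof (rule CauchyI)
    fix e :: real assume e: "0 < e"
    have "Cauchy (\<lambda>k. V k + synth dt (V k))" using Alim by (rule LIMSEQ_imp_Cauchy)
    then obtain N where N: "\<forall>m\<ge>N. \<forall>n\<ge>N. norm ((V m + synth dt (V m)) - (V n + synth dt (V n))) < e / 2"
      using e unfolding Cauchy_iff by (meson half_gt_zero)
    show "\<exists>M. \<forall>m\<ge>M. \<forall>n\<ge>M. norm (V m - V n) < e"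
    proof (intro exI[of _ N] allI impI)
      fix m n assume "m \<ge> N" "n \<ge> N"
      then show "norm (V m - V n) < e" using N lowerIS[of "V m" "V n"] by fastforce
    qed
  qed
  then obtain u where u: "V \<longlonglongrightarrow> u" using Cauchy_convergent_iff convergent_def by blast
  have nu: "norm u = 1"
  proof -
    have "(\<lambda>k. norm (V k)) \<longlonglongrightarrow> norm u" by (intro tendsto_norm u)
    moreover have "(\<lambda>k. norm (V k)) = (\<lambda>k. 1)" using U(1) by (simp add: V_def)
    ultimately show ?thesis using LIMSEQ_unique tendsto_const by metis
  qed
  have Tu: "synth psi u = 0"
    using synth_cont[OF psi_blockb u] TV0 LIMSEQ_unique by blast
  define a where "a n = (if n \<in> K then cinner (omega n) u else 0)" for n
  have a1: "(\<forall>n. n \<notin> K \<longrightarrow> a n = 0) \<and> (\<lambda>m. \<Sum>n\<in>K \<inter> {..m}. a n *\<^sub>C psi n) \<longlonglongrightarrow> 0"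
  proof
    show "\<forall>n. n \<notin> K \<longrightarrow> a n = 0" by (simp add: a_def)
    have "(\<lambda>m. \<Sum>n\<in>K \<inter> {..m}. a n *\<^sub>C psi n) = psK K (\<lambda>n. cinner (omega n) u *\<^sub>C psi n)"
      unfolding psK_def by (intro ext sum.cong) (auto simp: a_def)
    then show "(\<lambda>m. \<Sum>n\<in>K \<inter> {..m}. a n *\<^sub>C psi n) \<longlonglongrightarrow> 0"
      using synth_lim[OF psi_blockb, of u] Tu by simp
  qed
  have a2: "(\<forall>n. n \<notin> K \<longrightarrow> (\<lambda>_. 0::complex) n = 0) \<and> (\<lambda>m. \<Sum>n\<in>K \<inter> {..m}. (\<lambda>_. 0::complex) n *\<^sub>C psi n) \<longlonglongrightarrow> 0"
    by simp
  have ex1: "\<exists>!c. (\<forall>n. n \<notin> K \<longrightarrow> c n = 0) \<and> (\<lambda>m. \<Sum>n\<in>K \<inter> {..m}. c n *\<^sub>C psi n) \<longlonglongrightarrow> 0"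
    using psi_basis unfolding is_basis_def by (rule spec)
  have "a = (\<lambda>_. 0)"
    by (rule ex1_two[where P="\<lambda>c. (\<forall>n. n \<notin> K \<longrightarrow> c n = 0) \<and> (\<lambda>m. \<Sum>n\<in>K \<inter> {..m}. c n *\<^sub>C psi n) \<longlonglongrightarrow> 0", OF ex1 a1 a2])
  then have "\<And>n. n \<in> K \<Longrightarrow> cinner (omega n) u = 0" by (metis a_def)
  then have "u = 0" by (rule w_zero)
  then show False using nu by simp
qed

end

context frame_setup begin

lemma riesz_lower: "\<exists>c>0. \<forall>F a. finite F \<longrightarrow> F \<subseteq> K \<longrightarrow> c * (\<Sum>i\<in>F. (cmod (a i))\<^sup>2) \<le> (norm (\<Sum>i\<in>F. a i *\<^sub>C psi i))\<^sup>2"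
proof -
  obtain c0 where c0: "c0 > 0" "\<And>u. norm u = 1 \<Longrightarrow> c0 \<le> norm (synth psi u)" using T_below by blast
  show ?thesis
  proof (intro exI[of _ "c0\<^sup>2"] conjI allI impI)
    show "c0\<^sup>2 > 0" using c0 by simp
    fix F a assume F: "finite (F::nat set)" "F \<subseteq> K"
    define u where "u = (\<Sum>i\<in>F. a i *\<^sub>C omega i)"
    have nu: "(norm u)\<^sup>2 = (\<Sum>i\<in>F. (cmod (a i))\<^sup>2)" unfolding u_def by (rule w_block[OF F])
    have Tu: "synth psi u = (\<Sum>i\<in>F. a i *\<^sub>C psi i)" unfolding u_def by (rule synth_finite[OF F])
    show "c0\<^sup>2 * (\<Sum>i\<in>F. (cmod (a i))\<^sup>2) \<le> (norm (\<Sum>i\<in>F. a i *\<^sub>C psi i))\<^sup>2"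
    proof (cases "u = 0")
      case True then show ?thesis using nu by simp
    next
      case False
      define s where "s = complex_of_real (1 / norm u)"
      have "norm (s *\<^sub>C u) = 1" using False by (simp add: s_def norm_divide)
      then have "c0 \<le> norm (synth psi (s *\<^sub>C u))" by (rule c0(2))
      also have "\<dots> = norm (synth psi u) / norm u"
        using False by (simp add: synth_scale[OF psi_blockb] s_def norm_divide)
      finally have "c0 * norm u \<le> norm (synth psi u)" using False by (simp add: field_simps)
      then have "(c0 * norm u)\<^sup>2 \<le> (norm (synth psi u))\<^sup>2" using c0 by (intro power_mono) auto
      then show ?thesis using nu Tu by (simp add: power_mult_distrib)
    qed
  qed
qed

definition cR where "cR = (SOME c. c > 0 \<and> (\<forall>F a. finite F \<longrightarrow> F \<subseteq> K \<longrightarrow> c * (\<Sum>i\<in>F. (cmod (a i))\<^sup>2) \<le> (norm (\<Sum>i\<in>F. a i *\<^sub>C psi i))\<^sup>2))"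

lemma cR: "cR > 0" "\<And>F a. finite F \<Longrightarrow> F \<subseteq> K \<Longrightarrow> cR * (\<Sum>i\<in>F. (cmod (a i))\<^sup>2) \<le> (norm (\<Sum>i\<in>F. a i *\<^sub>C psi i))\<^sup>2"
proof -
  have "cR > 0 \<and> (\<forall>F a. finite F \<longrightarrow> F \<subseteq> K \<longrightarrow> cR * (\<Sum>i\<in>F. (cmod (a i))\<^sup>2) \<le> (norm (\<Sum>i\<in>F. a i *\<^sub>C psi i))\<^sup>2)"
    unfolding cR_def by (rule someI_ex[OF riesz_lower])
  then show "cR > 0" "\<And>F a. finite F \<Longrightarrow> F \<subseteq> K \<Longrightarrow> cR * (\<Sum>i\<in>F. (cmod (a i))\<^sup>2) \<le> (norm (\<Sum>i\<in>F. a i *\<^sub>C psi i))\<^sup>2"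
    by auto
qed

definition Bphi where "Bphi = 1 / cR"

lemma Bphi_pos: "Bphi > 0" using cR(1) by (simp add: Bphi_def)

lemma phi_bessel:
  assumes F: "finite F" "F \<subseteq> K"
  shows "(\<Sum>i\<in>F. (cmod (cinner (phi i) x))\<^sup>2) \<le> Bphi * (norm x)\<^sup>2"
proof -
  obtain a where a: "(\<forall>n. n \<notin> K \<longrightarrow> a n = 0) \<and> (\<lambda>m. \<Sum>n\<in>K \<inter> {..m}. a n *\<^sub>C psi n) \<longlonglongrightarrow> x"
    using psi_basis unfolding is_basis_def by (meson ex1_implies_ex)
  have lim: "psK K (\<lambda>n. a n *\<^sub>C psi n) \<longlonglongrightarrow> x" using a unfolding psK_def by simp
  have blk: "(\<Sum>i\<in>G. (cmod (a i))\<^sup>2) \<le> Bphi * (norm (\<Sum>i\<in>G. a i *\<^sub>C psi i))\<^sup>2"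
    if "finite G" "G \<subseteq> K" for G
    using cR(2)[OF that, of a] cR(1) by (simp add: Bphi_def field_simps)
  have "(\<Sum>i\<in>F. (cmod (a i))\<^sup>2) \<le> Bphi * (norm x)\<^sup>2"
    by (rule block_limit_lower[OF blk lim F]) auto
  moreover have "(\<Sum>i\<in>F. (cmod (a i))\<^sup>2) = (\<Sum>i\<in>F. (cmod (cinner (phi i) x))\<^sup>2)"
    by (rule sum.cong[OF refl]) (use F basis_coeff[OF lim] in auto)
  ultimately show ?thesis by simp
qed

lemma phi_block:
  assumes F: "finite F" "F \<subseteq> K"
  shows "(norm (\<Sum>i\<in>F. c i *\<^sub>C phi i))\<^sup>2 \<le> Bphi * (\<Sum>i\<in>F. (cmod (c i))\<^sup>2)"
  by (rule bessel_to_block) (use phi_bessel[OF F] Bphi_pos in auto)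

definition e where "e n = phi n - omega n"

lemma cinner_omega_e:
  assumes "m \<in> K" "n \<in> K"
  shows "cinner (omega m) (e n) = - cinner (d m) (phi n)"
proof -
  have "cinner (omega m) (e n) = cinner (psi m) (phi n) - cinner (d m) (phi n) - cinner (omega m) (omega n)"
    by (simp add: e_def d_def cinner_diff_left cinner_diff_right)
  also have "cinner (psi m) (phi n) = cinner (omega m) (omega n)"
    using assms biorth onw unfolding orthonormal_on_def by auto
  finally show ?thesis by simp
qed

lemma e_norm_has_sum:
  assumes "n \<in> K"
  shows "((\<lambda>m. (cmod (cinner (phi n) (d m)))\<^sup>2) has_sum (norm (e n))\<^sup>2) K"
proof -
  have "((\<lambda>m. (cmod (cinner (omega m) (e n)))\<^sup>2) has_sum (norm (e n))\<^sup>2) K" by (rule parseval_w)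
  moreover have "(cmod (cinner (omega m) (e n)))\<^sup>2 = (cmod (cinner (phi n) (d m)))\<^sup>2" if "m \<in> K" for m
  proof -
    have "cmod (cinner (omega m) (e n)) = cmod (cinner (d m) (phi n))"
      using cinner_omega_e[OF that assms] by simp
    also have "\<dots> = cmod (cinner (phi n) (d m))" by (subst cinner_commute) simp
    finally show ?thesis by simp
  qed
  ultimately show ?thesis using has_sum_cong by (metis (no_types, lifting))
qed

definition Ephi where "Ephi = infsum (\<lambda>n. (norm (e n))\<^sup>2) K"

lemma e_summable: "(\<lambda>n. (norm (e n))\<^sup>2) summable_on K" and Ephi_le: "Ephi \<le> Bphi * Dpsi"
proof -
  have fin: "(\<Sum>n\<in>G. (norm (e n))\<^sup>2) \<le> Bphi * Dpsi" if G: "finite G" "G \<subseteq> K" for G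
  proof -
    have h1: "((\<lambda>m. \<Sum>n\<in>G. (cmod (cinner (phi n) (d m)))\<^sup>2) has_sum (\<Sum>n\<in>G. (norm (e n))\<^sup>2)) K"
      by (rule has_sum_finite_sum[OF G(1)]) (use G e_norm_has_sum in auto)
    have h2: "((\<lambda>m. Bphi * (norm (d m))\<^sup>2) has_sum (Bphi * Dpsi)) K"
      by (rule has_sum_cmult_right[OF Dpsi_has_sum])
    show ?thesis by (rule has_sum_mono[OF h1 h2]) (rule phi_bessel[OF G])
  qed
  show "(\<lambda>n. (norm (e n))\<^sup>2) summable_on K"
    by (rule nonneg_sum_bound_has_sum(1)[OF _ fin]) auto
  show "Ephi \<le> Bphi * Dpsi" unfolding Ephi_def
    by (rule nonneg_sum_bound_has_sum(2)[OF _ fin]) auto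
qed

lemma Ephi_has_sum: "((\<lambda>n. (norm (e n))\<^sup>2) has_sum Ephi) K"
  using e_summable unfolding Ephi_def by (simp add: has_sum_infsum)

end

section \<open>ennreal infinite sums\<close>

lemma enn_summable: "(f::'i \<Rightarrow> ennreal) summable_on A"
  by (simp add: nonneg_summable_on_complete)

lemma enn_infsum_SUP: "(\<Sum>\<^sub>\<infinity>x\<in>A. (f x::ennreal)) = (SUP F\<in>{F. finite F \<and> F \<subseteq> A}. sum f F)"
  by (rule nonneg_infsum_complete) simp

lemma enn_infsum_of_has_sum:
  fixes g :: "'i \<Rightarrow> real"
  assumes "(g has_sum S) A" "\<And>x. x \<in> A \<Longrightarrow> g x \<ge> 0"
  shows "(\<Sum>\<^sub>\<infinity>x\<in>A. ennreal (g x)) = ennreal S"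
proof -
  have S: "infsum g A = S" "g summable_on A" using assms(1) by (auto simp: has_sum_iff)
  have "ennreal (infsum g A) = (SUP F\<in>{F. finite F \<and> F \<subseteq> A}. ennreal (sum g F))"
    by (rule infsum_nonneg_is_SUPREMUM_ennreal[OF S(2) assms(2)])
  also have "\<dots> = (SUP F\<in>{F. finite F \<and> F \<subseteq> A}. (\<Sum>x\<in>F. ennreal (g x)))"
  proof (rule SUP_cong[OF refl])
    fix F assume "F \<in> {F. finite F \<and> F \<subseteq> A}"
    then show "ennreal (sum g F) = (\<Sum>x\<in>F. ennreal (g x))"
      by (intro sum_ennreal[symmetric]) (use assms(2) in auto)
  qed
  also have "\<dots> = (\<Sum>\<^sub>\<infinity>x\<in>A. ennreal (g x))" by (rule enn_infsum_SUP[symmetric])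
  finally show ?thesis using S by simp
qed

lemma enn_sum_le_infsum:
  assumes "finite F" "F \<subseteq> A"
  shows "sum f F \<le> (\<Sum>\<^sub>\<infinity>x\<in>A. (f x::ennreal))"
  unfolding enn_infsum_SUP by (rule SUP_upper) (use assms in auto)

lemma enn_bound_real:
  fixes g :: "'i \<Rightarrow> real"
  assumes nn: "\<And>x. x \<in> A \<Longrightarrow> g x \<ge> 0" and b: "(\<Sum>\<^sub>\<infinity>x\<in>A. ennreal (g x)) \<le> ennreal R" and R: "R \<ge> 0"
  shows "g summable_on A" "infsum g A \<le> R"
proof -
  have fin: "sum g F \<le> R" if "finite F" "F \<subseteq> A" for F
  proof -
    have "ennreal (sum g F) = (\<Sum>x\<in>F. ennreal (g x))" using nn that by (simp add: subset_iff)
    also have "\<dots> \<le> (\<Sum>\<^sub>\<infinity>x\<in>A. ennreal (g x))" by (rule enn_sum_le_infsum[OF that])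
    also have "\<dots> \<le> ennreal R" by (rule b)
    finally show ?thesis using R by simp
  qed
  show "g summable_on A" by (rule nonneg_sum_bound_has_sum(1)[OF nn fin])
  show "infsum g A \<le> R" by (rule nonneg_sum_bound_has_sum(2)[OF nn fin])
qed

lemma enn_infsum_cmult: "(\<Sum>\<^sub>\<infinity>x\<in>A. c * (f x::ennreal)) = c * (\<Sum>\<^sub>\<infinity>x\<in>A. f x)"
  unfolding enn_infsum_SUP SUP_mult_left_ennreal sum_distrib_left ..

lemma enn_infsum_add: "(\<Sum>\<^sub>\<infinity>x\<in>A. (f x::ennreal) + g x) = (\<Sum>\<^sub>\<infinity>x\<in>A. f x) + (\<Sum>\<^sub>\<infinity>x\<in>A. g x)"
  by (rule infsum_add) (rule enn_summable)+

lemma enn_infsum_mono: "(\<And>x. x \<in> A \<Longrightarrow> f x \<le> g x) \<Longrightarrow> (\<Sum>\<^sub>\<infinity>x\<in>A. (f x::ennreal)) \<le> (\<Sum>\<^sub>\<infinity>x\<in>A. g x)"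
  by (rule infsum_mono) (rule enn_summable)+

lemma enn_infsum_finite_sum:
  "finite G \<Longrightarrow> (\<Sum>\<^sub>\<infinity>x\<in>A. \<Sum>j\<in>G. (f j x::ennreal)) = (\<Sum>j\<in>G. \<Sum>\<^sub>\<infinity>x\<in>A. f j x)"
  by (induction G rule: finite_induct) (simp_all add: enn_infsum_add)

lemma enn_infsum_swap_le:
  "(\<Sum>\<^sub>\<infinity>x\<in>A. \<Sum>\<^sub>\<infinity>y\<in>B. (f x y::ennreal)) \<le> (\<Sum>\<^sub>\<infinity>y\<in>B. \<Sum>\<^sub>\<infinity>x\<in>A. f x y)"
proof -
  have "sum (\<lambda>x. \<Sum>\<^sub>\<infinity>y\<in>B. f x y) F \<le> (\<Sum>\<^sub>\<infinity>y\<in>B. \<Sum>\<^sub>\<infinity>x\<in>A. f x y)" if F: "finite F" "F \<subseteq> A" for F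
  proof -
    have "sum (\<lambda>x. \<Sum>\<^sub>\<infinity>y\<in>B. f x y) F = (\<Sum>\<^sub>\<infinity>y\<in>B. \<Sum>x\<in>F. f x y)"
      by (rule enn_infsum_finite_sum[symmetric, OF F(1)])
    also have "\<dots> \<le> (\<Sum>\<^sub>\<infinity>y\<in>B. \<Sum>\<^sub>\<infinity>x\<in>A. f x y)"
      by (intro enn_infsum_mono enn_sum_le_infsum F)
    finally show ?thesis .
  qed
  then show ?thesis unfolding enn_infsum_SUP[of _ A] by (intro SUP_least) auto
qed

lemma enn_infsum_swap:
  "(\<Sum>\<^sub>\<infinity>x\<in>A. \<Sum>\<^sub>\<infinity>y\<in>B. (f x y::ennreal)) = (\<Sum>\<^sub>\<infinity>y\<in>B. \<Sum>\<^sub>\<infinity>x\<in>A. f x y)"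
  by (intro antisym enn_infsum_swap_le)

context frame_setup begin

definition B0 :: "'a set" where "B0 = (SOME B. onb_set B)"

lemma onb_wK: "onb_set (omega ` K)"
  unfolding onb_set_def
proof (intro conjI ballI)
  fix x y assume "x \<in> omega ` K" "y \<in> omega ` K"
  then obtain i j where ij: "i \<in> K" "j \<in> K" "x = omega i" "y = omega j" by blast
  have "cinner (omega i) (omega j) = (if i = j then 1 else 0)" using onw ij unfolding orthonormal_on_def by blast
  moreover have "(omega i = omega j) = (i = j)" using orthonormal_on_inj[OF onw] ij unfolding inj_on_def by blast
  ultimately show "cinner x y = (if x = y then 1 else 0)" using ij by simp
qed (rule clw)

lemma onbB0: "onb_set B0"
  unfolding B0_def by (rule someI[of onb_set, OF onb_wK])

lemma onB0: "orthonormal_on B0 id"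
  using onbB0 unfolding onb_set_def orthonormal_on_def by simp

lemma parseval_B0: "((\<lambda>f. (cmod (cinner f x))\<^sup>2) has_sum (norm x)\<^sup>2) B0"
proof -
  have "closure (cspan (id ` B0)) = UNIV" using onbB0 unfolding onb_set_def by simp
  from parseval[OF onB0 this, of x] show ?thesis by simp
qed

lemma enn_parseval_B0: "(\<Sum>\<^sub>\<infinity>f\<in>B0. ennreal ((cmod (cinner f x))\<^sup>2)) = ennreal ((norm x)\<^sup>2)"
  by (rule enn_infsum_of_has_sum[OF parseval_B0]) simp

lemma enn_parseval_B0': "(\<Sum>\<^sub>\<infinity>f\<in>B0. ennreal ((cmod (cinner x f))\<^sup>2)) = ennreal ((norm x)\<^sup>2)"
proof -
  have "cmod (cinner x f) = cmod (cinner f x)" for f by (subst cinner_commute) simp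
  then show ?thesis using enn_parseval_B0 by simp
qed

lemma hs_sq_B0: "hs_norm_sq (T::'a \<Rightarrow> 'a) = (\<Sum>\<^sub>\<infinity>f\<in>B0. ennreal ((norm (T f))\<^sup>2))"
  unfolding hs_norm_sq_def B0_def ..

lemma hs_adjoint:
  fixes S S' :: "'a \<Rightarrow> 'a"
  assumes adj: "\<And>f g. cinner g (S f) = cinner (S' g) f"
  shows "hs_norm_sq S = hs_norm_sq S'"
proof -
  have "hs_norm_sq S = (\<Sum>\<^sub>\<infinity>f\<in>B0. \<Sum>\<^sub>\<infinity>g\<in>B0. ennreal ((cmod (cinner g (S f)))\<^sup>2))"
    unfolding hs_sq_B0 enn_parseval_B0 ..
  also have "\<dots> = (\<Sum>\<^sub>\<infinity>f\<in>B0. \<Sum>\<^sub>\<infinity>g\<in>B0. ennreal ((cmod (cinner f (S' g)))\<^sup>2))"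
  proof -
    have "cmod (cinner g (S f)) = cmod (cinner f (S' g))" for f g
      unfolding adj by (subst cinner_commute) simp
    then show ?thesis by simp
  qed
  also have "\<dots> = (\<Sum>\<^sub>\<infinity>g\<in>B0. \<Sum>\<^sub>\<infinity>f\<in>B0. ennreal ((cmod (cinner f (S' g)))\<^sup>2))"
    by (rule enn_infsum_swap)
  also have "\<dots> = hs_norm_sq S'"
    unfolding hs_sq_B0 enn_parseval_B0 ..
  finally show ?thesis .
qed

lemma hs_bound_real:
  fixes T :: "'a \<Rightarrow> 'a"
  assumes "hs_norm_sq T \<le> ennreal R" "R \<ge> 0"
  shows "(\<lambda>f. (norm (T f))\<^sup>2) summable_on B0" "infsum (\<lambda>f. (norm (T f))\<^sup>2) B0 \<le> R"
  using enn_bound_real[of B0 "\<lambda>f. (norm (T f))\<^sup>2" R] assms unfolding hs_sq_B0 by auto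

lemma hs_sq_real:
  fixes T :: "'a \<Rightarrow> 'a"
  assumes "(\<lambda>f. (norm (T f))\<^sup>2) summable_on B0"
  shows "hs_norm_sq T = ennreal (infsum (\<lambda>f. (norm (T f))\<^sup>2) B0)"
  unfolding hs_sq_B0 by (rule enn_infsum_of_has_sum) (use assms in \<open>auto simp: has_sum_infsum\<close>)

lemma hs_norm_real:
  fixes T :: "'a \<Rightarrow> 'a"
  assumes "(\<lambda>f. (norm (T f))\<^sup>2) summable_on B0"
  shows "hs_norm T = ennreal (sqrt (infsum (\<lambda>f. (norm (T f))\<^sup>2) B0))"
proof -
  have nn: "infsum (\<lambda>f. (norm (T f))\<^sup>2) B0 \<ge> 0" by (rule infsum_nonneg) simp
  show ?thesis unfolding hs_norm_def hs_sq_real[OF assms] using nn by simp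
qed

end

context frame_setup begin

lemma phi_l2: "(\<lambda>n. (cmod (cinner (phi n) x))\<^sup>2) summable_on K"
  by (rule nonneg_sum_bound_has_sum(1)[OF _ phi_bessel]) auto

definition bndK :: "(nat \<Rightarrow> complex) \<Rightarrow> bool" where
  "bndK \<gamma> \<longleftrightarrow> (\<exists>G. \<forall>n\<in>K. cmod (\<gamma> n) \<le> G)"

lemma coef_l2:
  assumes "bndK \<gamma>"
  shows "(\<lambda>n. (cmod (\<gamma> n * cinner (phi n) x))\<^sup>2) summable_on K"
proof -
  obtain G where G: "\<forall>n\<in>K. cmod (\<gamma> n) \<le> G" using assms unfolding bndK_def by blast
  show ?thesis
  proof (rule summable_on_comparison_test)
    show "(\<lambda>n. G\<^sup>2 * (cmod (cinner (phi n) x))\<^sup>2) summable_on K"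
      by (rule summable_on_cmult_right[OF phi_l2])
    fix n assume n: "n \<in> K"
    have "cmod (\<gamma> n) * cmod (cinner (phi n) x) \<le> G * cmod (cinner (phi n) x)"
      using G n by (intro mult_right_mono) auto
    then have "(cmod (\<gamma> n) * cmod (cinner (phi n) x))\<^sup>2 \<le> (G * cmod (cinner (phi n) x))\<^sup>2"
      by (intro power_mono) auto
    then show "(cmod (\<gamma> n * cinner (phi n) x))\<^sup>2 \<le> G\<^sup>2 * (cmod (cinner (phi n) x))\<^sup>2"
      by (simp add: norm_mult power_mult_distrib)
  qed simp
qed

definition Aop :: "(nat \<Rightarrow> complex) \<Rightarrow> 'a \<Rightarrow> 'a" where
  "Aop \<gamma> x = lim (psK K (\<lambda>n. (\<gamma> n * cinner (phi n) x) *\<^sub>C phi n))"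

lemma Aop_lim:
  assumes "bndK \<gamma>"
  shows "psK K (\<lambda>n. (\<gamma> n * cinner (phi n) x) *\<^sub>C phi n) \<longlonglongrightarrow> Aop \<gamma> x"
proof -
  have "convergent (psK K (\<lambda>n. (\<gamma> n * cinner (phi n) x) *\<^sub>C phi n))"
    by (rule block_convergent[OF phi_block has_sum_infsum[OF coef_l2[OF assms]]])
  then show ?thesis unfolding Aop_def by (simp add: convergent_LIMSEQ_iff)
qed

lemma bndK_add: "bndK a \<Longrightarrow> bndK b \<Longrightarrow> bndK (\<lambda>n. a n + b n)"
  unfolding bndK_def by (metis (no_types, opaque_lifting) add_mono norm_triangle_ineq order_trans)
lemma bndK_diff: "bndK a \<Longrightarrow> bndK b \<Longrightarrow> bndK (\<lambda>n. a n - b n)"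
  unfolding bndK_def by (metis (no_types, opaque_lifting) add_mono norm_triangle_ineq4 order_trans)
lemma bndK_scale: "bndK a \<Longrightarrow> bndK (\<lambda>n. s * a n)"
  unfolding bndK_def by (metis (no_types, opaque_lifting) mult_left_mono norm_ge_zero norm_mult)

lemma Aop_add:
  assumes "bndK a" "bndK b"
  shows "Aop (\<lambda>n. a n + b n) x = Aop a x + Aop b x"
proof -
  have "psK K (\<lambda>n. ((a n + b n) * cinner (phi n) x) *\<^sub>C phi n)
      = (\<lambda>m. psK K (\<lambda>n. (a n * cinner (phi n) x) *\<^sub>C phi n) m + psK K (\<lambda>n. (b n * cinner (phi n) x) *\<^sub>C phi n) m)"
    by (rule ext) (simp add: psK_def distrib_right scaleC_add_left sum.distrib)
  moreover have "(\<lambda>m. psK K (\<lambda>n. (a n * cinner (phi n) x) *\<^sub>C phi n) m + psK K (\<lambda>n. (b n * cinner (phi n) x) *\<^sub>C phi n) m)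
     \<longlonglongrightarrow> Aop a x + Aop b x" by (intro tendsto_add Aop_lim assms)
  ultimately show ?thesis using Aop_lim[OF bndK_add[OF assms], where x=x] LIMSEQ_unique by metis
qed

lemma Aop_scale:
  assumes "bndK a"
  shows "Aop (\<lambda>n. s * a n) x = s *\<^sub>C Aop a x"
proof -
  have "psK K (\<lambda>n. ((s * a n) * cinner (phi n) x) *\<^sub>C phi n)
      = (\<lambda>m. s *\<^sub>C psK K (\<lambda>n. (a n * cinner (phi n) x) *\<^sub>C phi n) m)"
    by (rule ext) (simp add: psK_def scaleC_sum_right scaleC_scaleC mult.assoc)
  moreover have "(\<lambda>m. s *\<^sub>C psK K (\<lambda>n. (a n * cinner (phi n) x) *\<^sub>C phi n) m) \<longlonglongrightarrow> s *\<^sub>C Aop a x"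
    by (intro tendsto_scaleC tendsto_const Aop_lim assms)
  ultimately have "psK K (\<lambda>n. ((s * a n) * cinner (phi n) x) *\<^sub>C phi n) \<longlonglongrightarrow> s *\<^sub>C Aop a x" by simp
  then show ?thesis by (rule LIMSEQ_unique[OF Aop_lim[OF bndK_scale[OF assms], where x=x]])
qed

lemma Aop_diff:
  assumes "bndK a" "bndK b"
  shows "Aop (\<lambda>n. a n - b n) x = Aop a x - Aop b x"
proof -
  have "Aop (\<lambda>n. a n - b n) x + Aop b x = Aop (\<lambda>n. (a n - b n) + b n) x"
    by (rule Aop_add[symmetric]) (use bndK_diff[OF assms] assms in auto)
  then show ?thesis by (simp add: eq_diff_eq)
qed

lemma Aop_upper_pt:
  assumes "bndK \<gamma>"
  shows "(norm (Aop \<gamma> x))\<^sup>2 \<le> Bphi * infsum (\<lambda>n. (cmod (\<gamma> n * cinner (phi n) x))\<^sup>2) K"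
  by (rule block_limit_upper[OF phi_block has_sum_infsum[OF coef_l2[OF assms]] _ Aop_lim[OF assms]])
     (use Bphi_pos in auto)

lemma Aop_lower_pt:
  assumes "bndK \<gamma>"
  shows "infsum (\<lambda>n. (cmod (\<gamma> n * cinner (phi n) x))\<^sup>2) K \<le> Bpsi * (norm (Aop \<gamma> x))\<^sup>2"
  by (rule nonneg_sum_bound_has_sum(2))
     (use block_limit_lower[OF phi_lower_block Aop_lim[OF assms]] in auto)

lemma enn_coef_sum:
  assumes "bndK \<gamma>" "((\<lambda>n. (cmod (\<gamma> n))\<^sup>2) has_sum \<Gamma>) K"
  shows "(\<Sum>\<^sub>\<infinity>f\<in>B0. ennreal (infsum (\<lambda>n. (cmod (\<gamma> n * cinner (phi n) f))\<^sup>2) K)) = ennreal \<Gamma>"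
proof -
  have "(\<Sum>\<^sub>\<infinity>f\<in>B0. ennreal (infsum (\<lambda>n. (cmod (\<gamma> n * cinner (phi n) f))\<^sup>2) K))
      = (\<Sum>\<^sub>\<infinity>f\<in>B0. \<Sum>\<^sub>\<infinity>n\<in>K. ennreal ((cmod (\<gamma> n * cinner (phi n) f))\<^sup>2))"
    by (rule infsum_cong, rule enn_infsum_of_has_sum[symmetric])
       (use coef_l2[OF assms(1)] in \<open>auto simp: has_sum_infsum\<close>)
  also have "\<dots> = (\<Sum>\<^sub>\<infinity>n\<in>K. \<Sum>\<^sub>\<infinity>f\<in>B0. ennreal ((cmod (\<gamma> n * cinner (phi n) f))\<^sup>2))"
    by (rule enn_infsum_swap)
  also have "\<dots> = (\<Sum>\<^sub>\<infinity>n\<in>K. ennreal ((cmod (\<gamma> n))\<^sup>2) * (\<Sum>\<^sub>\<infinity>f\<in>B0. ennreal ((cmod (cinner (phi n) f))\<^sup>2)))"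
    by (rule infsum_cong) (simp add: norm_mult power_mult_distrib ennreal_mult enn_infsum_cmult[symmetric])
  also have "\<dots> = (\<Sum>\<^sub>\<infinity>n\<in>K. ennreal ((cmod (\<gamma> n))\<^sup>2))"
    by (rule infsum_cong) (simp add: enn_parseval_B0' phi_norm)
  also have "\<dots> = ennreal \<Gamma>" by (rule enn_infsum_of_has_sum[OF assms(2)]) simp
  finally show ?thesis .
qed

lemma Aop_hs:
  assumes "bndK \<gamma>" "((\<lambda>n. (cmod (\<gamma> n))\<^sup>2) has_sum \<Gamma>) K"
  shows "(\<lambda>f. (norm (Aop \<gamma> f))\<^sup>2) summable_on B0"
    "infsum (\<lambda>f. (norm (Aop \<gamma> f))\<^sup>2) B0 \<le> Bphi * \<Gamma>"
    "\<Gamma> \<le> Bpsi * infsum (\<lambda>f. (norm (Aop \<gamma> f))\<^sup>2) B0"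
proof -
  have G0: "\<Gamma> \<ge> 0" using assms(2) by (rule has_sum_nonneg) simp
  have up: "hs_norm_sq (Aop \<gamma>) \<le> ennreal (Bphi * \<Gamma>)"
  proof -
    have "hs_norm_sq (Aop \<gamma>) \<le> (\<Sum>\<^sub>\<infinity>f\<in>B0. ennreal Bphi * ennreal (infsum (\<lambda>n. (cmod (\<gamma> n * cinner (phi n) f))\<^sup>2) K))"
      unfolding hs_sq_B0
    proof (rule enn_infsum_mono)
      fix f
      have "ennreal ((norm (Aop \<gamma> f))\<^sup>2) \<le> ennreal (Bphi * infsum (\<lambda>n. (cmod (\<gamma> n * cinner (phi n) f))\<^sup>2) K)"
        using Aop_upper_pt[OF assms(1)] by (simp add: ennreal_leI)
      also have "\<dots> = ennreal Bphi * ennreal (infsum (\<lambda>n. (cmod (\<gamma> n * cinner (phi n) f))\<^sup>2) K)"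
        using Bphi_pos by (simp add: ennreal_mult')
      finally show "ennreal ((norm (Aop \<gamma> f))\<^sup>2) \<le> ennreal Bphi * ennreal (infsum (\<lambda>n. (cmod (\<gamma> n * cinner (phi n) f))\<^sup>2) K)" .
    qed
    also have "\<dots> = ennreal Bphi * ennreal \<Gamma>" by (simp add: enn_infsum_cmult enn_coef_sum[OF assms])
    also have "\<dots> = ennreal (Bphi * \<Gamma>)" using Bphi_pos by (simp add: ennreal_mult')
    finally show ?thesis .
  qed
  show s: "(\<lambda>f. (norm (Aop \<gamma> f))\<^sup>2) summable_on B0"
    by (rule hs_bound_real(1)[OF up]) (use Bphi_pos G0 in auto)
  show "infsum (\<lambda>f. (norm (Aop \<gamma> f))\<^sup>2) B0 \<le> Bphi * \<Gamma>"
    by (rule hs_bound_real(2)[OF up]) (use Bphi_pos G0 in auto)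
  have "ennreal \<Gamma> \<le> ennreal (Bpsi * infsum (\<lambda>f. (norm (Aop \<gamma> f))\<^sup>2) B0)"
  proof -
    have "ennreal \<Gamma> = (\<Sum>\<^sub>\<infinity>f\<in>B0. ennreal (infsum (\<lambda>n. (cmod (\<gamma> n * cinner (phi n) f))\<^sup>2) K))"
      by (rule enn_coef_sum[OF assms, symmetric])
    also have "\<dots> \<le> (\<Sum>\<^sub>\<infinity>f\<in>B0. ennreal Bpsi * ennreal ((norm (Aop \<gamma> f))\<^sup>2))"
    proof (rule enn_infsum_mono)
      fix f
      have "ennreal (infsum (\<lambda>n. (cmod (\<gamma> n * cinner (phi n) f))\<^sup>2) K) \<le> ennreal (Bpsi * (norm (Aop \<gamma> f))\<^sup>2)"
        using Aop_lower_pt[OF assms(1)] by (simp add: ennreal_leI)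
      then show "ennreal (infsum (\<lambda>n. (cmod (\<gamma> n * cinner (phi n) f))\<^sup>2) K) \<le> ennreal Bpsi * ennreal ((norm (Aop \<gamma> f))\<^sup>2)"
        using Bpsi_pos by (simp add: ennreal_mult')
    qed
    also have "\<dots> = ennreal Bpsi * hs_norm_sq (Aop \<gamma>)" by (simp add: enn_infsum_cmult hs_sq_B0)
    also have "\<dots> = ennreal (Bpsi * infsum (\<lambda>f. (norm (Aop \<gamma> f))\<^sup>2) B0)"
      using Bpsi_pos by (simp add: hs_sq_real[OF s] ennreal_mult')
    finally show ?thesis .
  qed
  moreover have nn: "0 \<le> Bpsi * infsum (\<lambda>f. (norm (Aop \<gamma> f))\<^sup>2) B0"
    using Bpsi_pos by (intro mult_nonneg_nonneg infsum_nonneg) auto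
  ultimately show "\<Gamma> \<le> Bpsi * infsum (\<lambda>f. (norm (Aop \<gamma> f))\<^sup>2) B0"
    using ennreal_le_iff[OF nn] by blast
qed

end

context frame_setup begin

lemma w_block_le: "finite F \<Longrightarrow> F \<subseteq> K \<Longrightarrow> (norm (\<Sum>i\<in>F. c i *\<^sub>C omega i))\<^sup>2 \<le> 1 * (\<Sum>i\<in>F. (cmod (c i))\<^sup>2)"
  using w_block by simp

lemma e_coef_bound: "(cmod (cinner (e n) x))\<^sup>2 \<le> (norm (e n))\<^sup>2 * (norm x)\<^sup>2"
proof -
  have "cmod (cinner (e n) x) \<le> norm (e n) * norm x" by (rule cinner_cs)
  then have "(cmod (cinner (e n) x))\<^sup>2 \<le> (norm (e n) * norm x)\<^sup>2" by (intro power_mono) auto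
  then show ?thesis by (simp add: power_mult_distrib)
qed

lemma e_l2: "(\<lambda>n. (cmod (cinner (e n) x))\<^sup>2) summable_on K"
  by (rule summable_on_comparison_test[OF summable_on_cmult_left[OF e_summable]]) (use e_coef_bound in auto)

lemma enn_e_sum: "(\<Sum>\<^sub>\<infinity>g\<in>B0. ennreal (infsum (\<lambda>n. (cmod (cinner (e n) g))\<^sup>2) K)) = ennreal Ephi"
proof -
  have "(\<Sum>\<^sub>\<infinity>g\<in>B0. ennreal (infsum (\<lambda>n. (cmod (cinner (e n) g))\<^sup>2) K))
      = (\<Sum>\<^sub>\<infinity>g\<in>B0. \<Sum>\<^sub>\<infinity>n\<in>K. ennreal ((cmod (cinner (e n) g))\<^sup>2))"
    by (rule infsum_cong, rule enn_infsum_of_has_sum[symmetric]) (use e_l2 in \<open>auto simp: has_sum_infsum\<close>)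
  also have "\<dots> = (\<Sum>\<^sub>\<infinity>n\<in>K. \<Sum>\<^sub>\<infinity>g\<in>B0. ennreal ((cmod (cinner (e n) g))\<^sup>2))"
    by (rule enn_infsum_swap)
  also have "\<dots> = (\<Sum>\<^sub>\<infinity>n\<in>K. ennreal ((norm (e n))\<^sup>2))"
    by (rule infsum_cong) (simp add: enn_parseval_B0')
  also have "\<dots> = ennreal Ephi" by (rule enn_infsum_of_has_sum[OF Ephi_has_sum]) simp
  finally show ?thesis .
qed

definition Wphi where "Wphi x = lim (psK K (\<lambda>n. cinner (phi n) x *\<^sub>C omega n))"
definition Pop where "Pop x = lim (psK K (\<lambda>n. cinner (e n) x *\<^sub>C omega n))"
definition Sadj where "Sadj x = lim (psK K (\<lambda>n. cinner (e n) x *\<^sub>C phi n))"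
definition G0 where "G0 x = Aop (\<lambda>_. 1) x"
definition Sop where "Sop x = G0 x - Wphi x"

lemma bndK_1: "bndK (\<lambda>_. 1)" unfolding bndK_def by auto

lemma Wphi_lim: "psK K (\<lambda>n. cinner (phi n) x *\<^sub>C omega n) \<longlonglongrightarrow> Wphi x"
proof -
  have "convergent (psK K (\<lambda>n. cinner (phi n) x *\<^sub>C omega n))"
    by (rule block_convergent[OF w_block_le has_sum_infsum[OF phi_l2]])
  then show ?thesis unfolding Wphi_def by (simp add: convergent_LIMSEQ_iff)
qed

lemma Pop_lim: "psK K (\<lambda>n. cinner (e n) x *\<^sub>C omega n) \<longlonglongrightarrow> Pop x"
proof -
  have "convergent (psK K (\<lambda>n. cinner (e n) x *\<^sub>C omega n))"
    by (rule block_convergent[OF w_block_le has_sum_infsum[OF e_l2]])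
  then show ?thesis unfolding Pop_def by (simp add: convergent_LIMSEQ_iff)
qed

lemma Sadj_lim: "psK K (\<lambda>n. cinner (e n) x *\<^sub>C phi n) \<longlonglongrightarrow> Sadj x"
proof -
  have "convergent (psK K (\<lambda>n. cinner (e n) x *\<^sub>C phi n))"
    by (rule block_convergent[OF phi_block has_sum_infsum[OF e_l2]])
  then show ?thesis unfolding Sadj_def by (simp add: convergent_LIMSEQ_iff)
qed

lemma G0_lim: "psK K (\<lambda>n. cinner (phi n) x *\<^sub>C phi n) \<longlonglongrightarrow> G0 x"
  using Aop_lim[OF bndK_1, where x=x] unfolding G0_def by simp

lemma Sop_lim: "psK K (\<lambda>n. cinner (phi n) x *\<^sub>C e n) \<longlonglongrightarrow> Sop x"
proof -
  have "psK K (\<lambda>n. cinner (phi n) x *\<^sub>C e n) = (\<lambda>m. psK K (\<lambda>n. cinner (phi n) x *\<^sub>C phi n) m - psK K (\<lambda>n. cinner (phi n) x *\<^sub>C omega n) m)"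
    by (rule ext) (simp add: psK_def e_def scaleC_diff_right sum_subtractf)
  moreover have "(\<lambda>m. psK K (\<lambda>n. cinner (phi n) x *\<^sub>C phi n) m - psK K (\<lambda>n. cinner (phi n) x *\<^sub>C omega n) m) \<longlonglongrightarrow> Sop x"
    unfolding Sop_def by (intro tendsto_diff G0_lim Wphi_lim)
  ultimately show ?thesis by simp
qed

lemma W_minus_P: "Wphi x - Pop x = x"
proof -
  have "(\<lambda>m. psK K (\<lambda>n. cinner (phi n) x *\<^sub>C omega n) m - psK K (\<lambda>n. cinner (e n) x *\<^sub>C omega n) m) \<longlonglongrightarrow> Wphi x - Pop x"
    by (intro tendsto_diff Wphi_lim Pop_lim)
  moreover have "(\<lambda>m. psK K (\<lambda>n. cinner (phi n) x *\<^sub>C omega n) m - psK K (\<lambda>n. cinner (e n) x *\<^sub>C omega n) m)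
      = psK K (\<lambda>n. cinner (omega n) x *\<^sub>C omega n)"
    by (rule ext) (simp add: psK_def e_def cinner_diff_left scaleC_diff_left sum_subtractf[symmetric])
  ultimately show ?thesis using expansion_w[of x] LIMSEQ_unique by metis
qed

lemma E0_decomp: "G0 x - x = Sop x + Pop x"
  using W_minus_P[of x] unfolding Sop_def by (simp add: algebra_simps)

lemma Sop_adj: "cinner g (Sop f) = cinner (Sadj g) f"
proof -
  have l1: "(\<lambda>m. cinner g (psK K (\<lambda>n. cinner (phi n) f *\<^sub>C e n) m)) \<longlonglongrightarrow> cinner g (Sop f)"
    by (intro tendsto_cinner tendsto_const Sop_lim)
  have l2: "(\<lambda>m. cinner (psK K (\<lambda>n. cinner (e n) g *\<^sub>C phi n) m) f) \<longlonglongrightarrow> cinner (Sadj g) f"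
    by (intro tendsto_cinner tendsto_const Sadj_lim)
  have eq: "cinner g (psK K (\<lambda>n. cinner (phi n) f *\<^sub>C e n) m) = cinner (psK K (\<lambda>n. cinner (e n) g *\<^sub>C phi n) m) f" for m
  proof -
    have "cinner g (psK K (\<lambda>n. cinner (phi n) f *\<^sub>C e n) m) = (\<Sum>n\<in>K \<inter> {..m}. cinner (phi n) f * cinner g (e n))"
      by (simp add: psK_def cinner_sum_right cinner_scaleC_right)
    also have "\<dots> = (\<Sum>n\<in>K \<inter> {..m}. cnj (cinner (e n) g) * cinner (phi n) f)"
      by (rule sum.cong[OF refl]) (subst cinner_commute[of "e _"], simp add: mult.commute)
    also have "\<dots> = cinner (psK K (\<lambda>n. cinner (e n) g *\<^sub>C phi n) m) f"
      by (simp add: psK_def cinner_sum_left cinner_scaleC_left)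
    finally show ?thesis .
  qed
  show ?thesis using l1 l2 unfolding eq using LIMSEQ_unique by blast
qed

lemma hs_Sadj: "hs_norm_sq Sadj \<le> ennreal (Bphi * Ephi)"
proof -
  have "hs_norm_sq Sadj \<le> (\<Sum>\<^sub>\<infinity>g\<in>B0. ennreal Bphi * ennreal (infsum (\<lambda>n. (cmod (cinner (e n) g))\<^sup>2) K))"
    unfolding hs_sq_B0
  proof (rule enn_infsum_mono)
    fix g
    have "(norm (Sadj g))\<^sup>2 \<le> Bphi * infsum (\<lambda>n. (cmod (cinner (e n) g))\<^sup>2) K"
      by (rule block_limit_upper[OF phi_block has_sum_infsum[OF e_l2] _ Sadj_lim]) (use Bphi_pos in auto)
    then show "ennreal ((norm (Sadj g))\<^sup>2) \<le> ennreal Bphi * ennreal (infsum (\<lambda>n. (cmod (cinner (e n) g))\<^sup>2) K)"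
      using Bphi_pos by (simp add: ennreal_leI flip: ennreal_mult')
  qed
  also have "\<dots> = ennreal Bphi * ennreal Ephi" by (simp add: enn_infsum_cmult enn_e_sum)
  also have "\<dots> = ennreal (Bphi * Ephi)" using Bphi_pos by (simp add: ennreal_mult')
  finally show ?thesis .
qed

lemma hs_Pop: "hs_norm_sq Pop \<le> ennreal Ephi"
proof -
  have "hs_norm_sq Pop \<le> (\<Sum>\<^sub>\<infinity>g\<in>B0. ennreal (infsum (\<lambda>n. (cmod (cinner (e n) g))\<^sup>2) K))"
    unfolding hs_sq_B0
  proof (rule enn_infsum_mono)
    fix g
    have "(norm (Pop g))\<^sup>2 \<le> 1 * infsum (\<lambda>n. (cmod (cinner (e n) g))\<^sup>2) K"
      by (rule block_limit_upper[OF w_block_le has_sum_infsum[OF e_l2] _ Pop_lim]) auto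
    then show "ennreal ((norm (Pop g))\<^sup>2) \<le> ennreal (infsum (\<lambda>n. (cmod (cinner (e n) g))\<^sup>2) K)"
      by (simp add: ennreal_leI)
  qed
  also have "\<dots> = ennreal Ephi" by (rule enn_e_sum)
  finally show ?thesis .
qed

lemma hs_E0: "hs_norm_sq (\<lambda>x. G0 x - x) \<le> ennreal (2 * Bphi * Ephi + 2 * Ephi)"
proof -
  have "hs_norm_sq (\<lambda>x. G0 x - x) \<le> (\<Sum>\<^sub>\<infinity>f\<in>B0. 2 * ennreal ((norm (Sop f))\<^sup>2) + 2 * ennreal ((norm (Pop f))\<^sup>2))"
    unfolding hs_sq_B0
  proof (rule enn_infsum_mono)
    fix f
    have "(norm (G0 f - f))\<^sup>2 \<le> 2 * (norm (Sop f))\<^sup>2 + 2 * (norm (Pop f))\<^sup>2"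
      unfolding E0_decomp by (rule norm_add_sq_le)
    then have "ennreal ((norm (G0 f - f))\<^sup>2) \<le> ennreal (2 * (norm (Sop f))\<^sup>2 + 2 * (norm (Pop f))\<^sup>2)"
      by (rule ennreal_leI)
    also have "\<dots> = 2 * ennreal ((norm (Sop f))\<^sup>2) + 2 * ennreal ((norm (Pop f))\<^sup>2)"
      by (simp add: ennreal_mult' ennreal_plus)
    finally show "ennreal ((norm (G0 f - f))\<^sup>2) \<le> 2 * ennreal ((norm (Sop f))\<^sup>2) + 2 * ennreal ((norm (Pop f))\<^sup>2)" .
  qed
  also have "\<dots> = 2 * hs_norm_sq Sop + 2 * hs_norm_sq Pop"
    by (simp add: enn_infsum_add enn_infsum_cmult hs_sq_B0)
  also have "hs_norm_sq Sop = hs_norm_sq Sadj" by (rule hs_adjoint[OF Sop_adj])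
  also have "2 * hs_norm_sq Sadj + 2 * hs_norm_sq Pop \<le> 2 * ennreal (Bphi * Ephi) + 2 * ennreal Ephi"
    by (intro add_mono mult_left_mono hs_Sadj hs_Pop) auto
  also have "\<dots> = ennreal (2 * Bphi * Ephi + 2 * Ephi)"
    using Bphi_pos Ephi_has_sum by (simp add: ennreal_mult' ennreal_plus has_sum_nonneg mult.assoc)
  finally show ?thesis .
qed

lemma Ephi_nonneg: "Ephi \<ge> 0"
  unfolding Ephi_def by (rule infsum_nonneg) simp

lemma E0_summable: "(\<lambda>f. (norm (G0 f - f))\<^sup>2) summable_on B0"
  using hs_bound_real(1)[OF hs_E0] Bphi_pos Ephi_nonneg by simp

end

lemma young_sq:
  fixes x y t :: real assumes t: "t > 0"
  shows "2 * x * y \<le> t * x\<^sup>2 + y\<^sup>2 / t"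
proof -
  have "0 \<le> (t * x - y)\<^sup>2" by simp
  then have "2 * t * x * y \<le> t\<^sup>2 * x\<^sup>2 + y\<^sup>2" by (simp add: power2_eq_square algebra_simps)
  then have "(2 * x * y) * t \<le> (t * x\<^sup>2 + y\<^sup>2 / t) * t"
    using t by (simp add: power2_eq_square algebra_simps)
  then show ?thesis using t by (simp add: mult_le_cancel_right)
qed

lemma norm_add_sq_le_t:
  fixes a b :: "'a::real_normed_vector" assumes t: "t > 0"
  shows "(norm (a + b))\<^sup>2 \<le> (1 + t) * (norm a)\<^sup>2 + (1 + 1/t) * (norm b)\<^sup>2"
proof -
  have "(norm (a + b))\<^sup>2 \<le> (norm a + norm b)\<^sup>2" by (intro power_mono norm_triangle_ineq) auto
  also have "\<dots> = (norm a)\<^sup>2 + 2 * norm a * norm b + (norm b)\<^sup>2" by (simp add: power2_sum)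
  also have "\<dots> \<le> (norm a)\<^sup>2 + (t * (norm a)\<^sup>2 + (norm b)\<^sup>2 / t) + (norm b)\<^sup>2"
    using young_sq[OF t, of "norm a" "norm b"] by linarith
  also have "\<dots> = (1 + t) * (norm a)\<^sup>2 + (1 + 1/t) * (norm b)\<^sup>2" by (simp add: algebra_simps)
  finally show ?thesis .
qed

lemma parallelogram_c:
  fixes a b :: "'a::complex_inner"
  shows "(norm a)\<^sup>2 + (norm b)\<^sup>2 = 2 * (norm ((1/2) *\<^sub>C (a + b)))\<^sup>2 + (1/2) * (norm (a - b))\<^sup>2"
proof -
  have "norm ((1/2::complex) *\<^sub>C (a + b)) = norm (a + b) / 2" by (simp add: norm_divide)
  then show ?thesis using norm_add_sq[of a b] norm_diff_sq[of a b] by (simp add: power_divide field_simps)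
qed

context frame_setup begin

definition gam :: "(nat \<Rightarrow> real) \<Rightarrow> nat \<Rightarrow> complex" where "gam \<alpha> n = complex_of_real (\<alpha> n)"
definition l2K :: "(nat \<Rightarrow> real) \<Rightarrow> bool" where "l2K \<alpha> \<longleftrightarrow> (\<lambda>n. (\<alpha> n)\<^sup>2) summable_on K"
definition Q :: "(nat \<Rightarrow> real) \<Rightarrow> real" where "Q \<alpha> = infsum (\<lambda>n. (\<alpha> n)\<^sup>2) K"
definition Eop :: "(nat \<Rightarrow> real) \<Rightarrow> 'a \<Rightarrow> 'a" where "Eop \<alpha> x = theta_op K phi \<alpha> x - x"
definition Fv :: "(nat \<Rightarrow> real) \<Rightarrow> real" where "Fv \<alpha> = infsum (\<lambda>f. (norm (Eop \<alpha> f))\<^sup>2) B0"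
definition Hv :: "(nat \<Rightarrow> real) \<Rightarrow> real" where "Hv \<delta> = infsum (\<lambda>f. (norm (Aop (gam \<delta>) f))\<^sup>2) B0"

lemma Q_has_sum: "l2K \<alpha> \<Longrightarrow> ((\<lambda>n. (\<alpha> n)\<^sup>2) has_sum Q \<alpha>) K"
  unfolding l2K_def Q_def by (simp add: has_sum_infsum)

lemma Q_nonneg: "Q \<alpha> \<ge> 0" unfolding Q_def by (rule infsum_nonneg) simp

lemma gam_has_sum: "l2K \<alpha> \<Longrightarrow> ((\<lambda>n. (cmod (gam \<alpha> n))\<^sup>2) has_sum Q \<alpha>) K"
  using Q_has_sum by (simp add: gam_def)

lemma l2K_bnd: "l2K \<alpha> \<Longrightarrow> bndK (gam \<alpha>)"
proof -
  assume l: "l2K \<alpha>"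
  have "cmod (gam \<alpha> n) \<le> sqrt (Q \<alpha>)" if n: "n \<in> K" for n
  proof -
    have "(\<alpha> n)\<^sup>2 \<le> Q \<alpha>"
      using finite_sum_le_has_sum[OF Q_has_sum[OF l], of "{n}"] n by simp
    then have "sqrt ((\<alpha> n)\<^sup>2) \<le> sqrt (Q \<alpha>)" by (rule real_sqrt_le_mono)
    then show ?thesis by (simp add: gam_def)
  qed
  then show "bndK (gam \<alpha>)" unfolding bndK_def by blast
qed

lemma l2K_comb:
  assumes "l2K \<alpha>" "l2K \<beta>"
  shows "l2K (\<lambda>n. a * \<alpha> n + b * \<beta> n)"
  unfolding l2K_def
proof (rule summable_on_comparison_test)
  show "(\<lambda>n. 2 * a\<^sup>2 * (\<alpha> n)\<^sup>2 + 2 * b\<^sup>2 * (\<beta> n)\<^sup>2) summable_on K"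
    using assms unfolding l2K_def
    by (intro summable_on_add summable_on_cmult_right)
  fix n
  have "(a * \<alpha> n + b * \<beta> n)\<^sup>2 \<le> 2 * (a * \<alpha> n)\<^sup>2 + 2 * (b * \<beta> n)\<^sup>2"
    using norm_add_sq_le[of "a * \<alpha> n" "b * \<beta> n"] by simp
  then show "(a * \<alpha> n + b * \<beta> n)\<^sup>2 \<le> 2 * a\<^sup>2 * (\<alpha> n)\<^sup>2 + 2 * b\<^sup>2 * (\<beta> n)\<^sup>2"
    by (simp add: power_mult_distrib)
qed simp

lemma l2K_diff: "l2K \<alpha> \<Longrightarrow> l2K \<beta> \<Longrightarrow> l2K (\<lambda>n. \<alpha> n - \<beta> n)"
  using l2K_comb[of \<alpha> \<beta> 1 "-1"] by simp

lemma l2K_mid: "l2K \<alpha> \<Longrightarrow> l2K \<beta> \<Longrightarrow> l2K (\<lambda>n. (\<alpha> n + \<beta> n) / 2)"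
  using l2K_comb[of \<alpha> \<beta> "1/2" "1/2"] by (simp add: add_divide_distrib)

lemma theta_eq:
  assumes "l2K \<alpha>"
  shows "theta_op K phi \<alpha> x = G0 x + Aop (gam \<alpha>) x"
proof -
  have b: "bndK (\<lambda>n. 1 + gam \<alpha> n)" by (rule bndK_add[OF bndK_1 l2K_bnd[OF assms]])
  have "(\<lambda>m. \<Sum>n\<in>K \<inter> {..m}. complex_of_real (1 + \<alpha> n) *\<^sub>C (cinner (phi n) x *\<^sub>C phi n))
      = psK K (\<lambda>n. ((1 + gam \<alpha> n) * cinner (phi n) x) *\<^sub>C phi n)"
    by (rule ext) (simp add: psK_def scaleC_scaleC gam_def)
  then have "theta_op K phi \<alpha> x = Aop (\<lambda>n. 1 + gam \<alpha> n) x"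
    unfolding theta_op_def Ksum_def using Aop_lim[OF b, where x=x] by (simp add: limI)
  also have "\<dots> = Aop (\<lambda>_. 1) x + Aop (gam \<alpha>) x" by (rule Aop_add[OF bndK_1 l2K_bnd[OF assms]])
  finally show ?thesis by (simp add: G0_def)
qed

lemma Eop_eq: "l2K \<alpha> \<Longrightarrow> Eop \<alpha> x = (G0 x - x) + Aop (gam \<alpha>) x"
  by (simp add: Eop_def theta_eq)

lemma Aop_summable: "l2K \<delta> \<Longrightarrow> (\<lambda>f. (norm (Aop (gam \<delta>) f))\<^sup>2) summable_on B0"
  by (rule Aop_hs(1)[OF l2K_bnd gam_has_sum])

lemma H_bounds:
  assumes "l2K \<delta>"
  shows "Q \<delta> \<le> Bpsi * Hv \<delta>" "Hv \<delta> \<le> Bphi * Q \<delta>"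
  using Aop_hs(2,3)[OF l2K_bnd[OF assms] gam_has_sum[OF assms]] unfolding Hv_def by auto

lemma Eop_summable:
  assumes "l2K \<alpha>"
  shows "(\<lambda>f. (norm (Eop \<alpha> f))\<^sup>2) summable_on B0"
proof (rule summable_on_comparison_test)
  show "(\<lambda>f. 2 * (norm (G0 f - f))\<^sup>2 + 2 * (norm (Aop (gam \<alpha>) f))\<^sup>2) summable_on B0"
    by (intro summable_on_add summable_on_cmult_right E0_summable Aop_summable assms)
  fix f show "(norm (Eop \<alpha> f))\<^sup>2 \<le> 2 * (norm (G0 f - f))\<^sup>2 + 2 * (norm (Aop (gam \<alpha>) f))\<^sup>2"
    unfolding Eop_eq[OF assms] by (rule norm_add_sq_le)
qed simp

lemma hs_norm_E: "l2K \<alpha> \<Longrightarrow> hs_norm (\<lambda>x. theta_op K phi \<alpha> x - x) = ennreal (sqrt (Fv \<alpha>))"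
  using hs_norm_real[OF Eop_summable] unfolding Fv_def Eop_def by simp

lemma Fv_nonneg: "Fv \<alpha> \<ge> 0" unfolding Fv_def by (rule infsum_nonneg) simp

lemma gam_diff: "gam (\<lambda>n. \<alpha> n - \<beta> n) = (\<lambda>n. gam \<alpha> n - gam \<beta> n)"
  by (simp add: gam_def fun_eq_iff)

lemma E_diff:
  assumes "l2K \<alpha>" "l2K \<beta>"
  shows "Eop \<alpha> x = Eop \<beta> x + Aop (gam (\<lambda>n. \<alpha> n - \<beta> n)) x"
  unfolding Eop_eq[OF assms(1)] Eop_eq[OF assms(2)] gam_diff
  using Aop_diff[OF l2K_bnd[OF assms(1)] l2K_bnd[OF assms(2)], where x=x] by simp

lemma E_mid:
  assumes "l2K \<alpha>" "l2K \<beta>"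
  shows "Eop (\<lambda>n. (\<alpha> n + \<beta> n) / 2) x = (1/2) *\<^sub>C (Eop \<alpha> x + Eop \<beta> x)"
proof -
  have g: "gam (\<lambda>n. (\<alpha> n + \<beta> n) / 2) = (\<lambda>n. (1/2) * (\<lambda>n. gam \<alpha> n + gam \<beta> n) n)"
    by (simp add: gam_def fun_eq_iff add_divide_distrib)
  have ab: "bndK (\<lambda>n. gam \<alpha> n + gam \<beta> n)" by (rule bndK_add[OF l2K_bnd[OF assms(1)] l2K_bnd[OF assms(2)]])
  have "Aop (gam (\<lambda>n. (\<alpha> n + \<beta> n) / 2)) x = (1/2) *\<^sub>C (Aop (gam \<alpha>) x + Aop (gam \<beta>) x)"
    unfolding g Aop_scale[OF ab] Aop_add[OF l2K_bnd[OF assms(1)] l2K_bnd[OF assms(2)]] ..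
  moreover have "(1/2::complex) *\<^sub>C (v + v) = v" for v :: 'a
  proof -
    have "(1/2::complex) *\<^sub>C (v + v) = (1/2 + 1/2) *\<^sub>C v" by (simp only: scaleC_add_right scaleC_add_left)
    also have "(1/2 + 1/2 :: complex) = 1" by simp
    finally show ?thesis by (simp add: scaleC_one)
  qed
  ultimately show ?thesis
    unfolding Eop_eq[OF l2K_mid[OF assms]] Eop_eq[OF assms(1)] Eop_eq[OF assms(2)]
    by (metis (no_types, lifting) add.assoc add.left_commute scaleC_add_right)
qed

lemma para:
  assumes "l2K \<alpha>" "l2K \<beta>"
  shows "Fv \<alpha> + Fv \<beta> = 2 * Fv (\<lambda>n. (\<alpha> n + \<beta> n) / 2) + (1/2) * Hv (\<lambda>n. \<alpha> n - \<beta> n)"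
proof -
  have pt: "(norm (Eop \<alpha> f))\<^sup>2 + (norm (Eop \<beta> f))\<^sup>2
     = 2 * (norm (Eop (\<lambda>n. (\<alpha> n + \<beta> n) / 2) f))\<^sup>2 + (1/2) * (norm (Aop (gam (\<lambda>n. \<alpha> n - \<beta> n)) f))\<^sup>2" for f
  proof -
    have "Aop (gam (\<lambda>n. \<alpha> n - \<beta> n)) f = Eop \<alpha> f - Eop \<beta> f" using E_diff[OF assms, of f] by simp
    then show ?thesis unfolding E_mid[OF assms] by (simp add: parallelogram_c)
  qed
  have "Fv \<alpha> + Fv \<beta> = infsum (\<lambda>f. (norm (Eop \<alpha> f))\<^sup>2 + (norm (Eop \<beta> f))\<^sup>2) B0"
    unfolding Fv_def by (rule infsum_add[symmetric]) (intro Eop_summable assms)+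
  also have "\<dots> = infsum (\<lambda>f. 2 * (norm (Eop (\<lambda>n. (\<alpha> n + \<beta> n) / 2) f))\<^sup>2 + (1/2) * (norm (Aop (gam (\<lambda>n. \<alpha> n - \<beta> n)) f))\<^sup>2) B0"
    unfolding pt ..
  also have "\<dots> = infsum (\<lambda>f. 2 * (norm (Eop (\<lambda>n. (\<alpha> n + \<beta> n) / 2) f))\<^sup>2) B0
      + infsum (\<lambda>f. (1/2) * (norm (Aop (gam (\<lambda>n. \<alpha> n - \<beta> n)) f))\<^sup>2) B0"
    by (rule infsum_add; rule summable_on_cmult_right; intro Eop_summable Aop_summable l2K_mid l2K_diff assms)
  also have "\<dots> = 2 * Fv (\<lambda>n. (\<alpha> n + \<beta> n) / 2) + (1/2) * Hv (\<lambda>n. \<alpha> n - \<beta> n)"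
    unfolding Fv_def Hv_def
    by (subst infsum_cmult_right, intro Eop_summable l2K_mid assms)+
       (subst infsum_cmult_right, intro Aop_summable l2K_diff assms, rule refl)
  finally show ?thesis .
qed

lemma F_tri:
  assumes "l2K \<alpha>" "l2K \<beta>" "t > 0"
  shows "Fv \<alpha> \<le> (1 + t) * Fv \<beta> + (1 + 1/t) * Hv (\<lambda>n. \<alpha> n - \<beta> n)"
proof -
  have "Fv \<alpha> \<le> infsum (\<lambda>f. (1 + t) * (norm (Eop \<beta> f))\<^sup>2 + (1 + 1/t) * (norm (Aop (gam (\<lambda>n. \<alpha> n - \<beta> n)) f))\<^sup>2) B0"
    unfolding Fv_def
  proof (rule infsum_mono)
    show "(\<lambda>f. (norm (Eop \<alpha> f))\<^sup>2) summable_on B0" by (rule Eop_summable[OF assms(1)])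
    show "(\<lambda>f. (1 + t) * (norm (Eop \<beta> f))\<^sup>2 + (1 + 1/t) * (norm (Aop (gam (\<lambda>n. \<alpha> n - \<beta> n)) f))\<^sup>2) summable_on B0"
      by (intro summable_on_add summable_on_cmult_right Eop_summable Aop_summable l2K_diff assms)
    fix f show "(norm (Eop \<alpha> f))\<^sup>2 \<le> (1 + t) * (norm (Eop \<beta> f))\<^sup>2 + (1 + 1/t) * (norm (Aop (gam (\<lambda>n. \<alpha> n - \<beta> n)) f))\<^sup>2"
      unfolding E_diff[OF assms(1,2), of f] by (rule norm_add_sq_le_t[OF assms(3)])
  qed
  also have "\<dots> = infsum (\<lambda>f. (1 + t) * (norm (Eop \<beta> f))\<^sup>2) B0
      + infsum (\<lambda>f. (1 + 1/t) * (norm (Aop (gam (\<lambda>n. \<alpha> n - \<beta> n)) f))\<^sup>2) B0"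
    by (rule infsum_add; rule summable_on_cmult_right; intro Eop_summable Aop_summable l2K_diff assms)
  also have "\<dots> = (1 + t) * Fv \<beta> + (1 + 1/t) * Hv (\<lambda>n. \<alpha> n - \<beta> n)"
    unfolding Fv_def Hv_def
    by (subst infsum_cmult_right, intro Eop_summable assms)
       (subst infsum_cmult_right, intro Aop_summable l2K_diff assms, rule refl)
  finally show ?thesis .
qed

end

lemma le_of_all_t:
  fixes x m :: real
  assumes m: "m \<ge> 0" and h: "\<And>t. t > 0 \<Longrightarrow> x \<le> (1 + t) * m"
  shows "x \<le> m"
proof (rule ccontr)
  assume "\<not> x \<le> m"
  then have xm: "x > m" by simp
  define t where "t = (x - m) / (2 * (m + 1))"
  have t: "t > 0" using xm m by (simp add: t_def)
  have "t * m \<le> (x - m) / 2"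
  proof -
    have "t * m = (x - m) / 2 * (m / (m + 1))" by (simp add: t_def field_simps)
    also have "\<dots> \<le> (x - m) / 2 * 1" using xm m by (intro mult_left_mono) auto
    finally show ?thesis by simp
  qed
  then have "(1 + t) * m < x" using xm by (simp add: algebra_simps)
  then show False using h[OF t] by simp
qed

context frame_setup begin

definition Adm where "Adm = {\<alpha>. (\<forall>n\<in>K. \<alpha> n \<ge> -1) \<and> l2K \<alpha>}"

lemma Adm_l2: "\<alpha> \<in> Adm \<Longrightarrow> l2K \<alpha>" by (simp add: Adm_def)

lemma zero_Adm: "(\<lambda>_. 0) \<in> Adm" by (simp add: Adm_def l2K_def)

lemma mid_Adm:
  assumes "\<alpha> \<in> Adm" "\<beta> \<in> Adm"
  shows "(\<lambda>n. (\<alpha> n + \<beta> n) / 2) \<in> Adm"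
proof -
  have "-1 \<le> (\<alpha> n + \<beta> n) / 2" if "n \<in> K" for n
  proof -
    have "-1 \<le> \<alpha> n" "-1 \<le> \<beta> n" using assms that unfolding Adm_def by auto
    then show ?thesis by (simp add: field_simps)
  qed
  moreover have "l2K (\<lambda>n. (\<alpha> n + \<beta> n) / 2)" using assms by (intro l2K_mid Adm_l2)
  ultimately show ?thesis unfolding Adm_def by blast
qed

definition mF where "mF = Inf (Fv ` Adm)"

lemma bdd_F: "bdd_below (Fv ` Adm)" using Fv_nonneg by (intro bdd_belowI[of _ 0]) auto

lemma mF_le: "\<alpha> \<in> Adm \<Longrightarrow> mF \<le> Fv \<alpha>"
  unfolding mF_def by (rule cInf_lower[OF imageI bdd_F])

lemma mF_nonneg: "mF \<ge> 0"
  unfolding mF_def using zero_Adm Fv_nonneg by (intro cInf_greatest) auto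

lemma Q_diff_bound:
  assumes "\<alpha> \<in> Adm" "\<beta> \<in> Adm"
  shows "Q (\<lambda>n. \<alpha> n - \<beta> n) \<le> 2 * Bpsi * (Fv \<alpha> + Fv \<beta> - 2 * mF)"
proof -
  have l: "l2K \<alpha>" "l2K \<beta>" using assms by (auto simp: Adm_l2)
  have "mF \<le> Fv (\<lambda>n. (\<alpha> n + \<beta> n) / 2)" by (rule mF_le[OF mid_Adm[OF assms]])
  then have "(1/2) * Hv (\<lambda>n. \<alpha> n - \<beta> n) \<le> Fv \<alpha> + Fv \<beta> - 2 * mF" using para[OF l] by linarith
  then have "Hv (\<lambda>n. \<alpha> n - \<beta> n) \<le> 2 * (Fv \<alpha> + Fv \<beta> - 2 * mF)" by (simp add: field_simps)
  then have "Bpsi * Hv (\<lambda>n. \<alpha> n - \<beta> n) \<le> Bpsi * (2 * (Fv \<alpha> + Fv \<beta> - 2 * mF))"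
    using Bpsi_pos by (intro mult_left_mono) auto
  then show ?thesis using H_bounds(1)[OF l2K_diff[OF l]] by (simp add: algebra_simps)
qed

lemma coord_le_Q: "l2K \<delta> \<Longrightarrow> n \<in> K \<Longrightarrow> (\<delta> n)\<^sup>2 \<le> Q \<delta>"
  using finite_sum_le_has_sum[OF Q_has_sum, of \<delta> "{n}"] by simp

lemma unique_min:
  assumes "\<alpha> \<in> Adm" "\<beta> \<in> Adm" "Fv \<alpha> \<le> mF" "Fv \<beta> \<le> mF" "n \<in> K"
  shows "\<alpha> n = \<beta> n"
proof -
  have "Q (\<lambda>n. \<alpha> n - \<beta> n) \<le> 2 * Bpsi * (Fv \<alpha> + Fv \<beta> - 2 * mF)" by (rule Q_diff_bound[OF assms(1,2)])
  also have "\<dots> \<le> 0" using assms(3,4) Bpsi_pos by (intro mult_nonneg_nonpos) auto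
  finally have q: "Q (\<lambda>n. \<alpha> n - \<beta> n) \<le> 0" .
  have "(\<alpha> n - \<beta> n)\<^sup>2 \<le> 0"
    by (rule order_trans[OF coord_le_Q[OF l2K_diff[OF Adm_l2[OF assms(1)] Adm_l2[OF assms(2)]] assms(5)] q])
  then show ?thesis by simp
qed

lemma exists_min: "\<exists>\<alpha>\<in>Adm. Fv \<alpha> \<le> mF"
proof -
  define \<epsilon> where "\<epsilon> k = inverse (real (Suc k))" for k
  have \<epsilon>pos: "\<epsilon> k > 0" for k by (simp add: \<epsilon>_def)
  have \<epsilon>lim: "\<epsilon> \<longlonglongrightarrow> 0" unfolding \<epsilon>_def by (rule LIMSEQ_inverse_real_of_nat)
  have \<epsilon>mono: "j \<ge> N \<Longrightarrow> \<epsilon> j \<le> \<epsilon> N" for j N by (simp add: \<epsilon>_def field_simps)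
  have "\<forall>k. \<exists>\<alpha>\<in>Adm. Fv \<alpha> < mF + \<epsilon> k"
  proof
    fix k
    have "Inf (Fv ` Adm) < mF + \<epsilon> k" using \<epsilon>pos[of k] by (simp add: mF_def)
    then show "\<exists>\<alpha>\<in>Adm. Fv \<alpha> < mF + \<epsilon> k" using cInf_lessD[of "Fv ` Adm"] zero_Adm by blast
  qed
  then obtain A where A: "\<And>k. A k \<in> Adm" "\<And>k. Fv (A k) < mF + \<epsilon> k" by metis
  have lA: "l2K (A k)" for k using A(1) by (rule Adm_l2)
  have Qd: "Q (\<lambda>n. A j n - A k n) \<le> 2 * Bpsi * (\<epsilon> j + \<epsilon> k)" for j k
  proof -
    have "Q (\<lambda>n. A j n - A k n) \<le> 2 * Bpsi * (Fv (A j) + Fv (A k) - 2 * mF)" by (rule Q_diff_bound[OF A(1) A(1)])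
    also have "\<dots> \<le> 2 * Bpsi * (\<epsilon> j + \<epsilon> k)"
      using A(2)[of j] A(2)[of k] Bpsi_pos by (intro mult_left_mono) auto
    finally show ?thesis .
  qed
  have finQd: "(\<Sum>n\<in>F. (A j n - A k n)\<^sup>2) \<le> 2 * Bpsi * (\<epsilon> j + \<epsilon> k)" if F: "finite F" "F \<subseteq> K" for F j k
  proof -
    have "(\<Sum>n\<in>F. (A j n - A k n)\<^sup>2) \<le> Q (\<lambda>n. A j n - A k n)"
      by (rule finite_sum_le_has_sum[OF Q_has_sum[OF l2K_diff[OF lA lA]] F]) simp
    then show ?thesis using Qd[of j k] by linarith
  qed
  have cauchy: "Cauchy (\<lambda>k. A k n)" if n: "n \<in> K" for n
  proof (rule CauchyI)
    fix e :: real assume e: "e > 0"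
    have "e\<^sup>2 / (4 * Bpsi) > 0" using e Bpsi_pos by simp
    then obtain N where N: "inverse (real (Suc N)) < e\<^sup>2 / (4 * Bpsi)" using reals_Archimedean by blast
    show "\<exists>M. \<forall>m\<ge>M. \<forall>k\<ge>M. norm (A m n - A k n) < e"
    proof (intro exI[of _ N] allI impI)
      fix j k assume jk: "j \<ge> N" "k \<ge> N"
      have "(A j n - A k n)\<^sup>2 \<le> 2 * Bpsi * (\<epsilon> j + \<epsilon> k)" using finQd[of "{n}" j k] n by simp
      also have "\<dots> \<le> 2 * Bpsi * (\<epsilon> N + \<epsilon> N)"
        using \<epsilon>mono[OF jk(1)] \<epsilon>mono[OF jk(2)] Bpsi_pos by (intro mult_left_mono) auto
      also have "\<dots> = 4 * Bpsi * \<epsilon> N" by simp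
      also have "\<dots> < 4 * Bpsi * (e\<^sup>2 / (4 * Bpsi))" using N Bpsi_pos unfolding \<epsilon>_def by (intro mult_strict_left_mono) auto
      also have "\<dots> = e\<^sup>2" using Bpsi_pos by simp
      finally have "(A j n - A k n)\<^sup>2 < e\<^sup>2" .
      then have "\<bar>A j n - A k n\<bar>\<^sup>2 < e\<^sup>2" by simp
      from power2_less_imp_less[OF this] have "\<bar>A j n - A k n\<bar> < e" using e by simp
      then show "norm (A j n - A k n) < e" by simp
    qed
  qed
  define a where "a n = (if n \<in> K then lim (\<lambda>k. A k n) else 0)" for n
  have alim: "(\<lambda>k. A k n) \<longlonglongrightarrow> a n" if "n \<in> K" for n
    using cauchy[OF that] that by (simp add: a_def Cauchy_convergent_iff convergent_LIMSEQ_iff)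
  have finb: "(\<Sum>n\<in>F. (a n - A k n)\<^sup>2) \<le> 2 * Bpsi * \<epsilon> k" if F: "finite F" "F \<subseteq> K" for F k
  proof -
    have "(\<Sum>n\<in>F. (a n - A k n)\<^sup>2) \<le> 2 * Bpsi * (0 + \<epsilon> k)"
    proof (rule LIMSEQ_le)
      show "(\<lambda>j. \<Sum>n\<in>F. (A j n - A k n)\<^sup>2) \<longlonglongrightarrow> (\<Sum>n\<in>F. (a n - A k n)\<^sup>2)"
        using F by (intro tendsto_sum tendsto_power tendsto_diff tendsto_const alim) auto
      show "(\<lambda>j. 2 * Bpsi * (\<epsilon> j + \<epsilon> k)) \<longlonglongrightarrow> 2 * Bpsi * (0 + \<epsilon> k)"
        by (intro tendsto_intros \<epsilon>lim)
      show "\<exists>N. \<forall>j\<ge>N. (\<Sum>n\<in>F. (A j n - A k n)\<^sup>2) \<le> 2 * Bpsi * (\<epsilon> j + \<epsilon> k)"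
        using finQd[OF F] by blast
    qed
    then show ?thesis by simp
  qed
  have ld: "l2K (\<lambda>n. a n - A k n)" "Q (\<lambda>n. a n - A k n) \<le> 2 * Bpsi * \<epsilon> k" for k
    using nonneg_sum_bound_has_sum[of K "\<lambda>n. (a n - A k n)\<^sup>2" "2 * Bpsi * \<epsilon> k"] finb
    unfolding l2K_def Q_def by auto
  have la: "l2K a"
  proof -
    have "l2K (\<lambda>n. 1 * A 0 n + 1 * (a n - A 0 n))" by (rule l2K_comb[OF lA ld(1)])
    then show ?thesis by simp
  qed
  have aAdm: "a \<in> Adm"
  proof -
    have "-1 \<le> a n" if n: "n \<in> K" for n
    proof (rule LIMSEQ_le_const[OF alim[OF n]])
      show "\<exists>N. \<forall>k\<ge>N. - 1 \<le> A k n" using A(1) n unfolding Adm_def by blast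
    qed
    then show ?thesis using la unfolding Adm_def by blast
  qed
  have "Fv a \<le> (1 + t) * mF" if t: "t > 0" for t
  proof (rule LIMSEQ_le_const)
    let ?R = "\<lambda>k. (1 + t) * (mF + \<epsilon> k) + (1 + 1/t) * (Bphi * (2 * Bpsi * \<epsilon> k))"
    show "?R \<longlonglongrightarrow> (1 + t) * mF"
    proof -
      have "?R \<longlonglongrightarrow> (1 + t) * (mF + 0) + (1 + 1/t) * (Bphi * (2 * Bpsi * 0))"
        by (intro tendsto_intros \<epsilon>lim)
      then show ?thesis by simp
    qed
    show "\<exists>N. \<forall>k\<ge>N. Fv a \<le> ?R k"
    proof (intro exI[of _ 0] allI impI)
      fix k :: nat
      have "Fv a \<le> (1 + t) * Fv (A k) + (1 + 1/t) * Hv (\<lambda>n. a n - A k n)"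
        by (rule F_tri[OF la lA t])
      also have "\<dots> \<le> (1 + t) * (mF + \<epsilon> k) + (1 + 1/t) * (Bphi * (2 * Bpsi * \<epsilon> k))"
      proof (rule add_mono)
        show "(1 + t) * Fv (A k) \<le> (1 + t) * (mF + \<epsilon> k)"
          using A(2)[of k] t by (intro mult_left_mono) auto
        have "Hv (\<lambda>n. a n - A k n) \<le> Bphi * Q (\<lambda>n. a n - A k n)" by (rule H_bounds(2)[OF ld(1)])
        also have "\<dots> \<le> Bphi * (2 * Bpsi * \<epsilon> k)" using ld(2)[of k] Bphi_pos by (intro mult_left_mono) auto
        finally show "(1 + 1/t) * Hv (\<lambda>n. a n - A k n) \<le> (1 + 1/t) * (Bphi * (2 * Bpsi * \<epsilon> k))"
          using t by (intro mult_left_mono) auto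
      qed
      finally show "Fv a \<le> ?R k" .
    qed
  qed
  then have "Fv a \<le> mF" by (rule le_of_all_t[OF mF_nonneg])
  then show ?thesis using aAdm by blast
qed

lemma theta_cong: "(\<And>n. n \<in> K \<Longrightarrow> \<alpha> n = \<beta> n) \<Longrightarrow> theta_op K phi \<alpha> = theta_op K phi \<beta>"
  unfolding theta_op_def Ksum_def by (intro ext arg_cong[where f=lim] sum.cong) auto

lemma hs_le_iff:
  assumes "\<alpha> \<in> Adm" "\<beta> \<in> Adm"
  shows "hs_norm (\<lambda>x. theta_op K phi \<alpha> x - x) \<le> hs_norm (\<lambda>x. theta_op K phi \<beta> x - x) \<longleftrightarrow> Fv \<alpha> \<le> Fv \<beta>"
  unfolding hs_norm_E[OF Adm_l2[OF assms(1)]] hs_norm_E[OF Adm_l2[OF assms(2)]]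
  using Fv_nonneg[of \<alpha>] Fv_nonneg[of \<beta>] by simp

lemma frakC_eq: "frakC K phi = theta_op K phi ` Adm"
  unfolding frakC_def Adm_def l2K_def by blast

lemma main:
  "\<exists>!\<Theta>. \<Theta> \<in> frakC K phi \<and> (\<forall>\<Theta>'\<in>frakC K phi. hs_norm (\<lambda>x. \<Theta> x - x) \<le> hs_norm (\<lambda>x. \<Theta>' x - x))"
proof -
  obtain a where a: "a \<in> Adm" "Fv a \<le> mF" using exists_min by blast
  show ?thesis
  proof (rule ex1I[of _ "theta_op K phi a"])
    show "theta_op K phi a \<in> frakC K phi \<and> (\<forall>\<Theta>'\<in>frakC K phi. hs_norm (\<lambda>x. theta_op K phi a x - x) \<le> hs_norm (\<lambda>x. \<Theta>' x - x))"
      unfolding frakC_eq using a by (auto simp: hs_le_iff intro: order_trans[OF _ mF_le])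
  next
    fix \<Theta> assume h: "\<Theta> \<in> frakC K phi \<and> (\<forall>\<Theta>'\<in>frakC K phi. hs_norm (\<lambda>x. \<Theta> x - x) \<le> hs_norm (\<lambda>x. \<Theta>' x - x))"
    then obtain b where b: "b \<in> Adm" "\<Theta> = theta_op K phi b" unfolding frakC_eq by blast
    have mem: "theta_op K phi a \<in> frakC K phi" unfolding frakC_eq using a(1) by blast
    have "hs_norm (\<lambda>x. \<Theta> x - x) \<le> hs_norm (\<lambda>x. theta_op K phi a x - x)"
      using h mem by blast
    then have "hs_norm (\<lambda>x. theta_op K phi b x - x) \<le> hs_norm (\<lambda>x. theta_op K phi a x - x)"
      using b(2) by simp
    then have "Fv b \<le> Fv a" using hs_le_iff[OF b(1) a(1)] by simp
    then have "Fv b \<le> mF" using a(2) by simp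
    then have "\<And>n. n \<in> K \<Longrightarrow> b n = a n" using unique_min[OF b(1) a(1) _ a(2)] by blast
    then show "\<Theta> = theta_op K phi a" unfolding b(2) by (rule theta_cong)
  qed
qed

end

theorem proposition4p2:
  fixes D :: "'a::{complex_inner, complete_space} set"
    and h :: "'a \<Rightarrow> 'a"
    and K :: "nat set"
    and \<psi> \<omega> \<phi> :: "nat \<Rightarrow> 'a"
  assumes K: "(\<exists>N::nat. K = {1..N}) \<or> K = {1..}"
    and qsa: "quasi_self_adjoint D h"
    and real_spec: "op_spectrum D h \<subseteq> \<real>"
    and simple: "simple_spectrum D h"
    and discrete: "compact_resolvent D h"
    and psi_eig: "\<forall>n\<in>K. is_eigenvector D h (\<psi> n)"
    and psi_basis: "is_basis K \<psi>"
    and chi_onb: "orthonormal_basis K \<omega>"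
    and quad_close: "(\<lambda>n. (norm (\<psi> n - \<omega> n))\<^sup>2) summable_on K"
    and phi_eig: "\<forall>n\<in>K. is_eigenvector (adj_dom D h) (adj D h) (\<phi> n)"
    and biorth: "\<forall>m\<in>K. \<forall>n\<in>K. cinner (\<psi> m) (\<phi> n) = (if n = m then 1 else 0)"
    and phi_norm: "\<forall>n\<in>K. norm (\<phi> n) = 1"
  shows "\<exists>!\<Theta>. \<Theta> \<in> frakC K \<phi> \<and>
           (\<forall>\<Theta>'\<in>frakC K \<phi>. hs_norm (\<lambda>x. \<Theta> x - x) \<le> hs_norm (\<lambda>x. \<Theta>' x - x))"
proof -
  interpret frame_setup K \<psi> \<omega> \<phi>
    by unfold_locales (use psi_basis chi_onb quad_close biorth phi_norm in auto)
  show ?thesis by (rule main)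
qed

end
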